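(* Assume $\hat s(X)$ is continuously distributed, fix $\delta\in(0,1)$ and $\alpha\in(0,1)$, and suppose the global null holds: $X_{2n+1},\dots,X_{2n+m}$ are i.i.d. from $P_X$ and independent of $\mathcal{D}$. Write $\hat u_i^{\mathrm{(marg)}}=\hat u^{\mathrm{(marg)}}(X_{2n+i})$. (a) If $m = \gamma n$ for a constant $\gamma \in (0, \infty)$, then \[\mathbb{P}\left(\sum_{i=1}^{m} -2\log(h^{\mathrm{d}} \circ \hat{u}_i^{\mathrm{(marg)}})\ge \chi^2(2m; 1 - \alpha)\right) \le \exp\left\{-C(\gamma, \delta)\log^2 n\right\}\] for some constant $C(\gamma, \delta) > 0$ depending only on $\gamma$ and $\delta$. (b) If $m \rightarrow \infty$ and $m = o(n / \log^2 n)$, then \[\mathbb{P}\left(\sum_{i=1}^{m} -2\log(h^{\mathrm{d}} \circ \hat{u}_i^{\mathrm{(marg)}})\ge \chi^2(2m; 1 - \alpha)\right) = \alpha + o(1).\]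
   Context: Setting: $P_X$ is a distribution on $\mathbb{R}^d$. Data $X_1,\dots,X_{2n}$ are i.i.d. from $P_X$; $\mathcal{D}^{\mathrm{train}}=\{X_1,\dots,X_n\}$ is treated as fixed, $\mathcal{D}^{\mathrm{cal}}=\{X_{n+1},\dots,X_{2n}\}$, $\mathcal{D}=\mathcal{D}^{\mathrm{train}}\cup\mathcal{D}^{\mathrm{cal}}$. The score $\hat s$ is a fixed function determined by $\mathcal{D}^{\mathrm{train}}$; "$\hat s(X)$ continuously distributed" means $\hat s(X)$ is atomless for $X\sim P_X$ independent of the data. Marginal conformal p-value: $\hat{u}^{\mathrm{(marg)}}(x) = \frac{1 + |\{i \in \{n+1,\dots,2n\} : \hat{s}(X_i) \le \hat{s}(x)\}|}{n+1}$, taking values in $\{1/(n+1),\dots,1\}$. DKWM adjustment: $h^{\mathrm d}\left(\frac{i}{n+1}\right)=\min\left\{\frac{i}{n+1}+\sqrt{\frac{\log(2/\delta)}{2n}},1\right\}$ for $i=1,\dots,n+1$. $\chi^2(2m;1-\alpha)$ is the $(1-\alpha)$-quantile of $\chi^2_{2m}$. *)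

theory Defs
  imports "HOL-Probability.Probability" "HOL-Library.Landau_Symbols"
begin

definition chi2_density :: "nat \<Rightarrow> real \<Rightarrow> real" where
  "chi2_density k x = (if x > 0 then
      x powr (real k / 2 - 1) * exp (- x / 2) / (2 powr (real k / 2) * Gamma (real k / 2))
    else 0)"

definition chi2_cdf :: "nat \<Rightarrow> real \<Rightarrow> real" where
  "chi2_cdf k x = measure (density lborel (\<lambda>t. ennreal (chi2_density k t))) {..x}"

definition chi2_quantile :: "nat \<Rightarrow> real \<Rightarrow> real" where
  "chi2_quantile k p = Inf {x. p \<le> chi2_cdf k x}"

text \<open>Marginal conformal p-value: calibration points are cal 0, ..., cal (n-1)
  (i.e. X_{n+1},...,X_{2n}), s is the score.\<close>
definition u_marg :: "nat \<Rightarrow> ('a \<Rightarrow> real) \<Rightarrow> (nat \<Rightarrow> 'a) \<Rightarrow> 'a \<Rightarrow> real" where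
  "u_marg n s cal x = (1 + real (card {j. j < n \<and> s (cal j) \<le> s x})) / (real n + 1)"

text \<open>DKWM adjustment (only ever evaluated on the grid i/(n+1)).\<close>
definition h_dkwm :: "nat \<Rightarrow> real \<Rightarrow> real \<Rightarrow> real" where
  "h_dkwm n \<delta> u = min (u + sqrt (ln (2 / \<delta>) / (2 * real n))) 1"

text \<open>Fisher combination statistic. Coordinates 0..n-1 of \<omega> are the calibration
  points, coordinates n..n+m-1 the test points X_{2n+1},...,X_{2n+m}.\<close>
definition fisher_stat :: "nat \<Rightarrow> nat \<Rightarrow> real \<Rightarrow> ('a \<Rightarrow> real) \<Rightarrow> (nat \<Rightarrow> 'a) \<Rightarrow> real" where
  "fisher_stat n m \<delta> s \<omega> = (\<Sum>i<m. - 2 * ln (h_dkwm n \<delta> (u_marg n s \<omega> (\<omega> (n + i)))))"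

definition reject_prob :: "'a measure \<Rightarrow> ('a \<Rightarrow> real) \<Rightarrow> nat \<Rightarrow> nat \<Rightarrow> real \<Rightarrow> real \<Rightarrow> real" where
  "reject_prob P s n m \<delta> \<alpha> =
     measure (PiM {..<n + m} (\<lambda>_. P))
       {\<omega> \<in> space (PiM {..<n + m} (\<lambda>_. P)).
          chi2_quantile (2 * m) (1 - \<alpha>) \<le> fisher_stat n m \<delta> s \<omega>}"

definition valid_setting :: "'a::euclidean_space measure \<Rightarrow> ('a \<Rightarrow> real) \<Rightarrow> bool" where
  "valid_setting P s \<longleftrightarrow> prob_space P \<and> sets P = sets borel \<and> s \<in> borel_measurable P \<and>
     (\<forall>t. measure P (s -` {t} \<inter> space P) = 0)"

end

theory Submission
  imports Defs "HOL-Real_Asymp.Real_Asymp"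
begin

lemma exp_le_quad_neg:
  fixes x :: real assumes "x \<le> 0" shows "exp x \<le> 1 + x + x^2"
proof -
  have "\<forall>y. x \<le> y \<and> y \<le> 0 \<longrightarrow> (1 + y + y^2/2 - exp y) \<le> (1 + x + x^2/2 - exp x)"
  proof (intro allI impI)
    fix y assume y: "x \<le> y \<and> y \<le> 0"
    show "(1 + y + y^2/2 - exp y) \<le> (1 + x + x^2/2 - exp x)"
    proof (rule DERIV_nonpos_imp_nonincreasing[of x y "\<lambda>y. 1 + y + y^2/2 - exp y"])
      show "x \<le> y" using y by simp
      fix z assume z: "x \<le> z" "z \<le> y"
      show "\<exists>d. ((\<lambda>y. 1 + y + y^2/2 - exp y) has_real_derivative d) (at z) \<and> d \<le> 0"
        apply (rule exI[of _ "1 + z - exp z"])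
        using exp_ge_add_one_self[of z] by (auto intro!: derivative_eq_intros)
    qed
  qed
  then have "1 + 0 + 0^2/2 - exp 0 \<le> 1 + x + x^2/2 - exp (x::real)" using assms by blast
  then have "exp x \<le> 1 + x + x^2/2" by simp
  also have "\<dots> \<le> 1 + x + x^2" by simp
  finally show ?thesis .
qed

lemma exp_le_quad:
  fixes x :: real assumes "x \<le> 1" shows "exp x \<le> 1 + x + x^2"
  using exp_le_quad_neg[of x] exp_bound[of x] assms by (cases "x \<le> 0") auto

lemma exp_le_quad_exp:
  fixes x :: real assumes "x \<le> 1" shows "exp x \<le> exp (x + x^2)"
proof -
  have "exp x \<le> 1 + (x + x^2)" using exp_le_quad[OF assms] by simp
  also have "\<dots> \<le> exp (x + x^2)" by (rule exp_ge_add_one_self)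
  finally show ?thesis .
qed

lemma ln_cubic_bound:
  fixes x :: real assumes "0 \<le> x" shows "ln (1 + x) \<le> x - x^2/2 + x^3/3"
proof -
  have "(0 - 0^2/2 + 0^3/3 - ln (1 + 0)) \<le> (x - x^2/2 + x^3/3 - ln (1 + x))"
  proof (rule DERIV_nonneg_imp_nondecreasing[of 0 x "\<lambda>x. x - x^2/2 + x^3/3 - ln (1 + x)"])
    show "0 \<le> x" by fact
    fix z :: real assume z: "0 \<le> z" "z \<le> x"
    have d: "((\<lambda>x. x - x^2/2 + x^3/3 - ln (1 + x)) has_real_derivative (1 - z + z^2 - 1/(1+z))) (at z)"
      using z by (auto intro!: derivative_eq_intros simp: field_simps power2_eq_square)
    have "1 - z + z^2 - 1/(1+z) = z^3/(1+z)" using z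
      by (simp add: field_simps power2_eq_square power3_eq_cube)
    also have "\<dots> \<ge> 0" using z by simp
    finally show "\<exists>y. ((\<lambda>x. x - x^2/2 + x^3/3 - ln (1 + x)) has_real_derivative y) (at z) \<and> 0 \<le> y"
      using d by blast
  qed
  then show ?thesis by simp
qed

lemma abs_ln_diff_le:
  fixes a b :: real assumes "0 < a" "0 < b"
  shows "\<bar>ln a - ln b\<bar> \<le> \<bar>a - b\<bar> / min a b"
proof -
  have 1: "ln a - ln b \<le> (a - b) / b"
    using ln_le_minus_one[of "a/b"] assms by (simp add: ln_div field_simps)
  have 2: "ln b - ln a \<le> (b - a) / a"
    using ln_le_minus_one[of "b/a"] assms by (simp add: ln_div field_simps)
  show ?thesis
  proof (cases "a \<le> b")
    case True
    then have "ln a \<le> ln b" using assms by simp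
    then show ?thesis using 2 True assms by (simp add: min_def abs_if)
  next
    case False
    then have "ln b \<le> ln a" using assms by simp
    then show ?thesis using 1 False assms by (simp add: min_def abs_if)
  qed
qed

lemma stirling_step:
  fixes k :: nat assumes k: "2 \<le> k"
  shows "real (k+1) ^ k * exp (-1) * sqrt (real k + 2) \<le> real k ^ k * sqrt (real k + 1)"
proof -
  define x where "x = real k"
  have x2: "x \<ge> 2" using k by (simp add: x_def)
  have l1: "ln (x + 1) \<le> ln x + (1/x - (1/x)^2/2 + (1/x)^3/3)"
  proof -
    have "x * (1 + 1/x) = x + 1" using x2 by (simp add: field_simps)
    moreover have "1 + 1/x > 0" using x2 by (simp add: add_pos_pos)
    ultimately have "ln (x+1) = ln x + ln (1 + 1/x)" using x2 ln_mult[of x "1 + 1/x"] by simp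
    then show ?thesis using ln_cubic_bound[of "1/x"] x2 by simp
  qed
  have l2: "ln (x + 2) \<le> ln (x + 1) + 1/(x+1)"
  proof -
    have "(x+1) * (1 + 1/(x+1)) = x + 2" using x2 by (simp add: field_simps)
    moreover have "1 + 1/(x+1) > 0" using x2 by (simp add: add_pos_pos)
    ultimately have "ln (x+2) = ln (x+1) + ln (1 + 1/(x+1))" using x2 ln_mult[of "x+1" "1 + 1/(x+1)"] by simp
    then show ?thesis using ln_add_one_self_le_self[of "1/(x+1)"] x2 by simp
  qed
  have br: "x * (1/x - (1/x)^2/2 + (1/x)^3/3) - 1 + 1/(2*(x+1)) \<le> 0"
  proof -
    have xp: "x > 0" using x2 by simp
    have eq: "x * (1/x - (1/x)^2/2 + (1/x)^3/3) - 1 + 1/(2*(x+1)) = (- 1/(2*x) + 1/(3*x^2)) + 1/(2*(x+1))"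
    proof -
      have "x * (1/x - (1/x)^2/2 + (1/x)^3/3) = x * (1/x) - x * ((1/x)^2/2) + x*((1/x)^3/3)"
        by (simp add: algebra_simps)
      also have "x * (1/x) = 1" using xp by simp
      also have "x * ((1/x)^2/2) = 1/(2*x)" using xp by (simp add: power2_eq_square)
      also have "x * ((1/x)^3/3) = 1/(3*x^2)" using xp by (simp add: power2_eq_square power3_eq_cube)
      finally show ?thesis by simp
    qed
    have a: "1/(2*(x+1)) - 1/(2*x) = - 1/(2*x*(x+1))" using xp by (simp add: divide_simps)
    have b: "1/(3*x^2) \<le> 1/(2*x*(x+1))"
    proof (rule divide_left_mono)
      have "2*x \<le> x*x" using x2 mult_right_mono[of 2 x x] by simp
      then show "2*x*(x+1) \<le> 3*x^2" by (simp add: power2_eq_square algebra_simps)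
    qed (use xp in auto)
    show ?thesis using eq a b by linarith
  qed
  have "ln ((x+1) ^ k * exp (-1) * sqrt (x + 2)) = k * ln (x+1) - 1 + ln (x+2) / 2"
    using x2 by (simp add: ln_mult ln_realpow ln_sqrt)
  also have "\<dots> \<le> k * (ln x + (1/x - (1/x)^2/2 + (1/x)^3/3)) - 1 + (ln (x + 1) + 1/(x+1)) / 2"
    using l1 l2 by (intro add_mono diff_mono mult_left_mono divide_right_mono) auto
  also have "\<dots> = k * ln x + ln (x+1)/2 + (x * (1/x - (1/x)^2/2 + (1/x)^3/3) - 1 + 1/(2*(x+1)))"
    by (simp add: x_def algebra_simps add_divide_distrib)
  also have "\<dots> \<le> k * ln x + ln (x+1)/2" using br by simp
  also have "\<dots> = ln (x ^ k * sqrt (x + 1))"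
    using x2 by (simp add: ln_mult ln_realpow ln_sqrt)
  finally have "ln ((x+1) ^ k * exp (-1) * sqrt (x + 2)) \<le> ln (x ^ k * sqrt (x + 1))" .
  then have "(x+1) ^ k * exp (-1) * sqrt (x + 2) \<le> x ^ k * sqrt (x + 1)"
    using x2 by (subst (asm) ln_le_cancel_iff) auto
  then show ?thesis by (simp add: x_def add.commute)
qed

lemma fact_lower_aux:
  fixes k :: nat assumes "2 \<le> k"
  shows "real k ^ k * exp (- real k) * sqrt (real k + 1) \<le> fact k"
  using assms
proof (induction k rule: dec_induct)
  case base
  have ee: "exp (2::real) = exp 1 * exp 1" by (simp flip: exp_add)
  have "exp (1::real) \<ge> 2" using exp_ge_add_one_self[of 1] by simp
  then have "exp 1 * exp 1 \<ge> (2::real) * 2" by (intro mult_mono) auto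
  then have e2: "exp (2::real) \<ge> 4" using ee by simp
  have "sqrt (3::real) \<le> 2" by (rule real_sqrt_le_iff[THEN iffD2, of 3 4, simplified])
  then have "4 * sqrt (3::real) \<le> 2 * exp 2" using e2 by linarith
  then show ?case by (simp add: exp_minus field_simps)
next
  case (step k)
  have "real (Suc k) ^ Suc k * exp (- real (Suc k)) * sqrt (real (Suc k) + 1)
     = real (k+1) * (real (k+1) ^ k * exp (-1) * sqrt (real k + 2)) * exp (- real k)"
  proof -
    have "exp (- real (Suc k)) = exp (-1) * exp (- real k)" by (simp flip: exp_add)
    moreover have "real (Suc k) + 1 = real k + 2" by simp
    moreover have "real (Suc k) ^ Suc k = real (k+1) * real (k+1) ^ k" by simp
    ultimately show ?thesis by (simp only: mult_ac)
  qed
  also have "\<dots> \<le> real (k+1) * (real k ^ k * sqrt (real k + 1)) * exp (- real k)"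
    using stirling_step[OF step(1)] by (intro mult_right_mono mult_left_mono) auto
  also have "\<dots> = real (k+1) * (real k ^ k * exp (- real k) * sqrt (real k + 1))" by simp
  also have "\<dots> \<le> real (k+1) * fact k" using step(3) by (intro mult_left_mono) auto
  also have "\<dots> = fact (Suc k)" by simp
  finally show ?case .
qed

lemma fact_lower:
  fixes k :: nat
  shows "real k ^ k * exp (- real k) * sqrt (real k + 1) \<le> fact k"
proof (cases "2 \<le> k")
  case True then show ?thesis by (rule fact_lower_aux)
next
  case False
  then have "k = 0 \<or> k = 1" by auto
  then show ?thesis
  proof
    assume "k = 0" then show ?thesis by simp
  next
    assume k1: "k = 1"
    have "exp (1::real) \<ge> 2" using exp_ge_add_one_self[of 1] by simp
    moreover have "sqrt (2::real) \<le> 2" by (rule real_sqrt_le_iff[THEN iffD2, of 2 4, simplified])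
    ultimately show ?thesis using k1 by (simp add: exp_minus field_simps)
  qed
qed

lemma pow_exp_max:
  fixes y :: real and k :: nat assumes "0 \<le> y"
  shows "y ^ k * exp (- y) \<le> real k ^ k * exp (- real k)"
proof (cases "k = 0")
  case True then show ?thesis using assms by simp
next
  case False
  show ?thesis
  proof (cases "y = 0")
    case True then show ?thesis using False by (simp add: zero_power)
  next
    case False2: False
    then have y: "0 < y" using assms by simp
    have kp: "0 < real k" using False by simp
    have "ln (y / k) \<le> y / k - 1" using ln_le_minus_one[of "y/k"] y kp by simp
    then have "k * ln (y / k) \<le> k * (y/k - 1)" using kp by (intro mult_left_mono) auto
    moreover have "k * ln (y / k) = k * ln y - k * ln k" using y kp by (simp add: ln_div right_diff_distrib)
    moreover have "k * (y/k - 1) = y - k" using kp by (simp add: right_diff_distrib)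
    ultimately have "k * ln y - y \<le> k * ln k - k" by linarith
    then have "exp (k * ln y - y) \<le> exp (k * ln k - k)" by simp
    moreover have "exp (k * ln y - y) = y ^ k * exp (- y)"
      using y by (simp add: exp_diff exp_minus ln_realpow[symmetric] field_simps)
    moreover have "exp (k * ln k - k) = real k ^ k * exp (- real k)"
      using kp by (simp add: exp_diff exp_minus ln_realpow[symmetric] field_simps)
    ultimately show ?thesis by simp
  qed
qed

lemma erlang_half_bound:
  fixes k :: nat
  shows "erlang_density k (1/2) x \<le> 1 / (2 * sqrt (real k + 1))"
proof (cases "x < 0")
  case True then show ?thesis by (simp add: erlang_density_def)
next
  case False
  define y where "y = x / 2"
  have y: "0 \<le> y" using False by (simp add: y_def)
  have xy: "x = 2 * y" by (simp add: y_def)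
  have "erlang_density k (1/2) x = ((1/2)^(Suc k) * x^k * exp (- (1/2) * x)) / fact k"
    using False by (simp add: erlang_density_def)
  also have "\<dots> = (1/2) * (y ^ k * exp (- y)) / fact k"
    unfolding xy by (simp add: power_mult_distrib power_one_over)
  finally have "erlang_density k (1/2) x = (1/2) * (y ^ k * exp (- y)) / fact k" .
  also have "\<dots> \<le> (1/2) * (real k ^ k * exp (- real k)) / fact k"
    by (intro divide_right_mono mult_left_mono pow_exp_max y) auto
  also have "\<dots> \<le> 1 / (2 * sqrt (real k + 1))"
  proof -
    have s: "0 < sqrt (real k + 1)" by simp
    have "(real k ^ k * exp (- real k)) * sqrt (real k + 1) \<le> fact k" by (rule fact_lower)
    then have "real k ^ k * exp (- real k) \<le> fact k / sqrt (real k + 1)"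
      using s by (simp add: field_simps)
    then have "(1/2) * (real k ^ k * exp (- real k)) / fact k \<le> (1/2) * (fact k / sqrt (real k + 1)) / fact k"
      by (intro divide_right_mono mult_left_mono) auto
    also have "\<dots> = 1 / (2 * sqrt (real k + 1))" by simp
    finally show ?thesis .
  qed
  finally show ?thesis .
qed

lemma borel_measurable_chi2_density[measurable]: "chi2_density k \<in> borel_measurable borel"
  unfolding chi2_density_def[abs_def] by measurable

lemma chi2_density_eq:
  fixes k :: nat and x :: real assumes "x \<noteq> 0" and m: "m = Suc k"
  shows "chi2_density (2 * m) x = erlang_density k (1/2) x"
proof (cases "x > 0")
  case True
  have b: "real (2 * m) / 2 = real (Suc k)" using m by simp
  have a: "real (2 * m) / 2 - 1 = real k" unfolding b by simp
  have g: "Gamma (real (Suc k)) = fact k"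
    using Gamma_fact[of k] by (simp add: add.commute)
  have "chi2_density (2 * m) x = x ^ k * exp (- x / 2) / (2 ^ Suc k * fact k)"
    unfolding chi2_density_def using True
    by (simp only: a b if_True powr_realpow g) (simp add: powr_realpow)
  also have "\<dots> = erlang_density k (1/2) x"
    using True by (simp add: erlang_density_def power_one_over field_simps)
  finally show ?thesis .
next
  case False
  then have "x < 0" using assms by simp
  then show ?thesis by (simp add: chi2_density_def erlang_density_def)
qed

definition chiM :: "nat \<Rightarrow> real measure" where
  "chiM k = density lborel (erlang_density k (1/2))"

lemma chiM_eq: assumes m: "m = Suc k" shows "density lborel (\<lambda>t. ennreal (chi2_density (2 * m) t)) = chiM k"
proof -
  have h: "\<And>x. x \<noteq> 0 \<Longrightarrow> ennreal (chi2_density (2*m) x) = ennreal (erlang_density k (1/2) x)"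
    using chi2_density_eq[OF _ m] by presburger
  show ?thesis unfolding chiM_def
    by (intro density_cong) (auto intro!: eventually_mono[OF AE_lborel_singleton[of 0]] h)
qed

lemma chi2_cdf_eq: "m = Suc k \<Longrightarrow> chi2_cdf (2 * m) x = measure (chiM k) {..x}"
  unfolding chi2_cdf_def by (simp only: chiM_eq)

lemma prob_space_chiM: "prob_space (chiM k)"
  unfolding chiM_def by (rule prob_space_erlang_density) simp

lemma real_distribution_chiM: "real_distribution (chiM k)"
  unfolding real_distribution_def real_distribution_axioms_def
  using prob_space_chiM by (simp add: chiM_def)

lemma sets_chiM[simp, measurable_cong]: "sets (chiM k) = sets borel"
  by (simp add: chiM_def)

lemma space_chiM[simp]: "space (chiM k) = UNIV"
  by (simp add: chiM_def)

lemma emeasure_chiM_bound: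
  assumes "A \<in> sets borel"
  shows "emeasure (chiM k) A \<le> ennreal (1 / (2 * sqrt (real k + 1))) * emeasure lborel A"
proof -
  have "emeasure (chiM k) A = (\<integral>\<^sup>+x. ennreal (erlang_density k (1/2) x) * indicator A x \<partial>lborel)"
    unfolding chiM_def using assms by (simp add: emeasure_density)
  also have "\<dots> \<le> (\<integral>\<^sup>+x. ennreal (1 / (2 * sqrt (real k + 1))) * indicator A x \<partial>lborel)"
    by (intro nn_integral_mono mult_right_mono) (auto intro: erlang_half_bound)
  also have "\<dots> = ennreal (1 / (2 * sqrt (real k + 1))) * emeasure lborel A"
    using assms by (simp add: nn_integral_cmult_indicator)
  finally show ?thesis .
qed

lemma measure_chiM_Ioc:
  assumes "a \<le> b"
  shows "measure (chiM k) {a<..b} \<le> (b - a) / (2 * sqrt (real k + 1))"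
proof -
  interpret prob_space "chiM k" by (rule prob_space_chiM)
  have "ennreal (measure (chiM k) {a<..b}) = emeasure (chiM k) {a<..b}"
    by (simp add: emeasure_eq_measure)
  also have "\<dots> \<le> ennreal (1 / (2 * sqrt (real k + 1))) * ennreal (b - a)"
    using emeasure_chiM_bound[of "{a<..b}" k] assms by simp
  also have "\<dots> = ennreal ((b - a) / (2 * sqrt (real k + 1)))"
    using assms by (simp add: ennreal_mult[symmetric])
  finally show ?thesis using assms by (subst (asm) ennreal_le_iff) auto
qed

lemma measure_chiM_singleton: "measure (chiM k) {x} = 0"
proof -
  interpret prob_space "chiM k" by (rule prob_space_chiM)
  have "measure (chiM k) {x} \<le> measure (chiM k) {x - 1<..x}"
    by (intro finite_measure_mono) auto
  have "emeasure (chiM k) {x} \<le> ennreal (1 / (2 * sqrt (real k + 1))) * emeasure lborel {x}"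
    by (rule emeasure_chiM_bound) simp
  then have "emeasure (chiM k) {x} = 0" by simp
  then show ?thesis by (simp add: measure_def)
qed

lemma chi_cdf_isCont: "isCont (cdf (chiM k)) x"
proof -
  interpret real_distribution "chiM k" by (rule real_distribution_chiM)
  show ?thesis using isCont_cdf measure_chiM_singleton by simp
qed

lemma chi_cdf_neg: "x < 0 \<Longrightarrow> cdf (chiM k) x = 0"
proof -
  assume x: "x < 0"
  interpret prob_space "chiM k" by (rule prob_space_chiM)
  have "emeasure (chiM k) {..x} = erlang_CDF k (1/2) x"
    unfolding chiM_def by (rule emeasure_erlang_density) simp
  then show ?thesis using x by (simp add: cdf_def measure_def erlang_CDF_def)
qed

lemma chi_quantile:
  fixes p :: real assumes p: "0 < p" "p < 1" and m: "m = Suc k"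
  shows "chi2_cdf (2 * m) (chi2_quantile (2 * m) p) = p"
proof -
  interpret real_distribution "chiM k" by (rule real_distribution_chiM)
  define F where "F = cdf (chiM k)"
  have Fc: "chi2_cdf (2 * m) = F" unfolding F_def using chi2_cdf_eq[OF m] by (simp add: fun_eq_iff cdf_def)
  define S where "S = {x. p \<le> F x}"
  have q: "chi2_quantile (2 * m) p = Inf S" unfolding chi2_quantile_def S_def Fc ..
  have cont: "\<And>x. isCont F x" unfolding F_def by (rule chi_cdf_isCont)
  have "eventually (\<lambda>x. F x > p) at_top"
    using cdf_lim_at_top_prob p unfolding F_def by (intro order_tendstoD) auto
  then obtain x0 where "F x0 > p" by (auto dest: eventually_happens)
  then have ne: "S \<noteq> {}" unfolding S_def by (auto intro!: exI[of _ x0])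
  have bdd: "bdd_below S"
  proof (rule bdd_belowI[of _ 0])
    fix x assume "x \<in> S"
    then have "p \<le> F x" by (simp add: S_def)
    then show "0 \<le> x" using chi_cdf_neg[of x k] p unfolding F_def by (cases "x < 0") auto
  qed
  have cl: "closed S"
    unfolding S_def by (intro closed_Collect_le continuous_intros continuous_at_imp_continuous_on ballI cont)
  have qS: "Inf S \<in> S" by (rule closed_contains_Inf[OF ne bdd cl])
  then have ge: "p \<le> F (Inf S)" by (simp add: S_def)
  have le: "F (Inf S) \<le> p"
  proof (rule ccontr)
    assume "\<not> F (Inf S) \<le> p"
    then have e: "F (Inf S) - p > 0" by simp
    from cont[of "Inf S"] e obtain d where d: "d > 0" "\<And>y. dist y (Inf S) < d \<Longrightarrow> dist (F y) (F (Inf S)) < F (Inf S) - p"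
      unfolding continuous_at_eps_delta by blast
    have "dist (Inf S - d/2) (Inf S) < d" using d by (simp add: dist_real_def)
    then have "dist (F (Inf S - d/2)) (F (Inf S)) < F (Inf S) - p" by (rule d(2))
    then have "p \<le> F (Inf S - d/2)" by (simp add: dist_real_def abs_if split: if_splits)
    then have "Inf S - d/2 \<in> S" by (simp add: S_def)
    then have "Inf S \<le> Inf S - d/2" using bdd by (rule cInf_lower)
    then show False using d by simp
  qed
  show ?thesis unfolding q Fc using ge le by simp
qed

lemma chi_cdf_lower_tail:
  fixes t :: real assumes t: "t > 0" and m: "m = Suc k"
  shows "chi2_cdf (2 * m) (2 * real m - t) \<le> 4 * real m / t^2"
proof -
  interpret prob_space "chiM k" by (rule prob_space_chiM)
  have D: "distributed (chiM k) lborel (\<lambda>x. x) (erlang_density k (1/2))"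
    unfolding distributed_def chiM_def by (simp add: distr_id2)
  have E: "expectation (\<lambda>x. x) = 2 * real m"
    using erlang_ith_moment[OF _ D, of 1] m by simp
  have V: "variance (\<lambda>x. x) = 4 * real m"
    using erlang_distributed_variance[OF _ D] m by (simp add: power2_eq_square)
  have I: "integrable (chiM k) (\<lambda>x. x ^ 2)"
    using erlang_ith_moment_integrable[OF _ D, of 2] by simp
  have "chi2_cdf (2 * m) (2 * real m - t) = prob {..2 * real m - t}"
    by (rule chi2_cdf_eq[OF m])
  also have "\<dots> \<le> prob {x \<in> space (chiM k). \<bar>x - expectation (\<lambda>x. x)\<bar> \<ge> t}"
    unfolding E by (intro finite_measure_mono) auto
  also have "\<dots> \<le> variance (\<lambda>x. x) / t^2"
    by (rule Chebyshev_inequality) (use I t in auto)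
  also have "\<dots> = 4 * real m / t^2" using V by simp
  finally show ?thesis .
qed

locale setting =
  fixes P :: "'a::euclidean_space measure" and s :: "'a \<Rightarrow> real"
  assumes vs: "valid_setting P s"
begin

lemma prob_P: "prob_space P" using vs by (simp add: valid_setting_def)

sublocale prob_space P by (rule prob_P)

lemma sets_P[measurable_cong]: "sets P = sets borel" using vs by (simp add: valid_setting_def)
lemma s_meas[measurable]: "s \<in> borel_measurable P" using vs by (simp add: valid_setting_def)
lemma atomless: "measure P (s -` {t} \<inter> space P) = 0" using vs by (simp add: valid_setting_def)

definition D where "D = distr P borel s"
definition Fs where "Fs t = measure P {x\<in>space P. s x \<le> t}"

lemma realD: "real_distribution D" unfolding D_def by simp

lemma fbmD: "finite_borel_measure D" using real_distribution.finite_borel_measure_M[OF realD] .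

lemma Fs_cdf: "Fs = cdf D"
proof
  fix t
  have "{x \<in> space P. s x \<le> t} = s -` {..t} \<inter> space P" by auto
  then show "Fs t = cdf D t" unfolding Fs_def cdf_def D_def
    by (simp add: measure_distr)
qed

lemma Fs_mono: "t \<le> t' \<Longrightarrow> Fs t \<le> Fs t'"
  unfolding Fs_cdf using finite_borel_measure.cdf_nondecreasing[OF fbmD] by blast

lemma Fs_cont: "isCont Fs t"
proof -
  have "measure D {t} = measure P (s -` {t} \<inter> space P)" unfolding D_def by (simp add: measure_distr)
  then have "measure D {t} = 0" using atomless by simp
  then show ?thesis unfolding Fs_cdf using finite_borel_measure.isCont_cdf[OF fbmD] by simp
qed

lemma Fs_top: "(Fs \<longlongrightarrow> 1) at_top"
  unfolding Fs_cdf using real_distribution.cdf_lim_at_top_prob[OF realD] .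

lemma Fs_bot: "(Fs \<longlongrightarrow> 0) at_bot"
  unfolding Fs_cdf using finite_borel_measure.cdf_lim_at_bot[OF fbmD] .

lemma Fs_bounds: "0 \<le> Fs t" "Fs t \<le> 1"
  unfolding Fs_def by auto

definition U where "U x = Fs (s x)"

lemma Fs_meas[measurable]: "Fs \<in> borel_measurable borel"
  by (rule borel_measurable_mono) (auto simp: mono_def Fs_mono)

lemma U_meas[measurable]: "U \<in> borel_measurable P"
  unfolding U_def[abs_def] by measurable

lemma U_bounds: "0 \<le> U x" "U x \<le> 1"
  unfolding U_def by (auto simp: Fs_bounds)

lemma U_le_lt1:
  assumes v: "0 \<le> v" "v < 1"
  shows "prob {x\<in>space P. U x \<le> v} = v"
proof (cases "{t. Fs t \<le> v} = {}")
  case True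
  have v0: "v = 0"
  proof (rule ccontr)
    assume "v \<noteq> 0"
    then have "v > 0" using v by simp
    then have "eventually (\<lambda>t. Fs t < v) at_bot" using Fs_bot by (intro order_tendstoD) auto
    then obtain t where "Fs t < v" by (auto dest: eventually_happens)
    then show False using True less_imp_le by blast
  qed
  have e: "{x\<in>space P. U x \<le> v} = {}" using True by (auto simp: U_def)
  show ?thesis by (subst e) (simp add: v0)
next
  case False
  define S where "S = {t. Fs t \<le> v}"
  have ne: "S \<noteq> {}" using False by (simp add: S_def)
  have "eventually (\<lambda>t. Fs t > v) at_top" using Fs_top v by (intro order_tendstoD) auto
  then obtain t0 where t0: "Fs t0 > v" by (auto dest: eventually_happens)
  have bdd: "bdd_above S"
  proof (rule bdd_aboveI[of _ t0])
    fix t assume "t \<in> S"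
    then have "Fs t \<le> v" by (simp add: S_def)
    then show "t \<le> t0" using Fs_mono[of t0 t] t0 by (cases "t \<le> t0") auto
  qed
  have cl: "closed S"
    unfolding S_def by (intro closed_Collect_le continuous_intros continuous_at_imp_continuous_on ballI Fs_cont)
  define ts where "ts = Sup S"
  have tsS: "ts \<in> S" unfolding ts_def by (rule closed_contains_Sup[OF ne bdd cl])
  then have le: "Fs ts \<le> v" by (simp add: S_def)
  have ge: "v \<le> Fs ts"
  proof (rule ccontr)
    assume "\<not> v \<le> Fs ts"
    then have e: "v - Fs ts > 0" by simp
    from Fs_cont[of ts] e obtain d where d: "d > 0" "\<And>y. dist y ts < d \<Longrightarrow> dist (Fs y) (Fs ts) < v - Fs ts"
      unfolding continuous_at_eps_delta by blast
    have "dist (ts + d/2) ts < d" using d by (simp add: dist_real_def)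
    then have "dist (Fs (ts + d/2)) (Fs ts) < v - Fs ts" by (rule d(2))
    then have "Fs (ts + d/2) \<le> v" by (simp add: dist_real_def abs_if split: if_splits)
    then have "ts + d/2 \<in> S" by (simp add: S_def)
    then have "ts + d/2 \<le> ts" using bdd unfolding ts_def by (rule cSup_upper)
    then show False using d by simp
  qed
  have eq: "{x\<in>space P. U x \<le> v} = {x\<in>space P. s x \<le> ts}"
  proof safe
    fix x assume "x \<in> space P" "U x \<le> v"
    then have "s x \<in> S" by (simp add: S_def U_def)
    then show "s x \<le> ts" using bdd unfolding ts_def by (rule cSup_upper)
  next
    fix x assume "x \<in> space P" "s x \<le> ts"
    then show "U x \<le> v" using Fs_mono[of "s x" ts] le by (simp add: U_def)
  qed
  show ?thesis unfolding eq using le ge by (simp add: Fs_def[symmetric])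
qed

lemma U_le:
  assumes v: "0 \<le> v" "v \<le> 1"
  shows "prob {x\<in>space P. U x \<le> v} = v"
proof (cases "v < 1")
  case True then show ?thesis using U_le_lt1 v by simp
next
  case False
  then have "v = 1" using v by simp
  moreover have "{x\<in>space P. U x \<le> 1} = space P" using U_bounds by auto
  ultimately show ?thesis by (simp add: prob_space)
qed

lemma U_less:
  assumes v: "0 \<le> v" "v \<le> 1"
  shows "prob {x\<in>space P. U x < v} = v"
proof -
  have up: "prob {x\<in>space P. U x < v} \<le> v"
  proof -
    have "prob {x\<in>space P. U x < v} \<le> prob {x\<in>space P. U x \<le> v}"
      by (intro finite_measure_mono) auto
    then show ?thesis using U_le[OF v] by simp
  qed
  have lo: "v - h \<le> prob {x\<in>space P. U x < v}" if h: "0 < h" "h \<le> v" for h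
  proof -
    have "v - h = prob {x\<in>space P. U x \<le> v - h}" using U_le[of "v - h"] h v by simp
    also have "\<dots> \<le> prob {x\<in>space P. U x < v}"
      using h by (intro finite_measure_mono) auto
    finally show ?thesis .
  qed
  define p where "p = prob {x\<in>space P. U x < v}"
  have p0: "0 \<le> p" by (simp add: p_def)
  show ?thesis
  proof (rule antisym[OF up], rule ccontr)
    assume "\<not> v \<le> prob {x\<in>space P. U x < v}"
    then have c: "p < v" by (simp add: p_def)
    define h where "h = (v - p) / 2"
    have h1: "0 < h" using c by (simp add: h_def)
    have h2: "h \<le> v" using c v p0 unfolding h_def by (simp add: field_simps)
    have "v - h \<le> p" using lo[OF h1 h2] by (simp add: p_def)
    then show False using c by (simp add: h_def field_simps)
  qed
qed

lemma U_distributed: "distributed P lborel U (\<lambda>x. ennreal (indicator {0..1::real} x))"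
proof -
  have "distributed P lborel U (\<lambda>x. indicator {0..1} x / measure lborel {0..1::real})"
    by (rule uniform_distrI_borel_atLeastAtMost) (auto simp: U_le)
  then show ?thesis by simp
qed

lemma U_exp: "distributed P lborel (\<lambda>x. -2 * ln (U x)) (exponential_density (1/2))"
proof (rule exponential_distributedI)
  show "(\<lambda>x. -2 * ln (U x)) \<in> borel_measurable P" by measurable
  fix a :: real assume a: "0 \<le> a"
  define w where "w = exp (- a / 2)"
  have w: "0 < w" "w \<le> 1" using a by (auto simp: w_def)
  have pt: "(-2 * ln (U x) \<le> a) \<longleftrightarrow> (U x \<le> 0 \<or> w \<le> U x)" for x
  proof (cases "U x \<le> 0")
    case True
    then have "U x = 0" using U_bounds[of x] by simp
    then show ?thesis using a by simp
  next
    case False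
    then have u: "U x > 0" by simp
    have lw: "ln w = - a / 2" by (simp add: w_def)
    have "(-2 * ln (U x) \<le> a) \<longleftrightarrow> ln w \<le> ln (U x)" unfolding lw by (intro iffI) linarith+
    also have "\<dots> \<longleftrightarrow> w \<le> U x" using u w by simp
    finally show ?thesis using False by simp
  qed
  have eq: "{x\<in>space P. -2 * ln (U x) \<le> a} = {x\<in>space P. U x \<le> 0} \<union> (space P - {x\<in>space P. U x < w})"
  proof (intro set_eqI)
    fix x show "x \<in> {x\<in>space P. -2 * ln (U x) \<le> a} \<longleftrightarrow> x \<in> {x\<in>space P. U x \<le> 0} \<union> (space P - {x\<in>space P. U x < w})"
      using pt[of x] by auto
  qed
  have disj: "{x\<in>space P. U x \<le> 0} \<inter> (space P - {x\<in>space P. U x < w}) = {}" using w by auto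
  have "prob {x\<in>space P. -2 * ln (U x) \<le> a} = prob {x\<in>space P. U x \<le> 0} + prob (space P - {x\<in>space P. U x < w})"
    unfolding eq by (rule finite_measure_Union[OF _ _ disj]) auto
  also have "\<dots> = 0 + (1 - w)"
    using U_le[of 0] U_less[of w] w by (simp add: prob_compl)
  finally have "prob {x\<in>space P. -2 * ln (U x) \<le> a} = 1 - exp (- a * (1/2))" by (simp add: w_def)
  then show "emeasure P {x\<in>space P. -2 * ln (U x) \<le> a} = 1 - ennreal (exp (- a * (1/2)))"
  proof -
    have "ennreal (1 - exp (- a * (1/2))) = 1 - ennreal (exp (- a * (1/2)))"
      using ennreal_minus[of "exp (- a * (1/2))" 1] by simp
    then show ?thesis using \<open>prob {x\<in>space P. -2 * ln (U x) \<le> a} = 1 - exp (- a * (1/2))\<close>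
      by (simp add: emeasure_eq_measure)
  qed
qed simp

end

context setting
begin

definition Om :: "nat \<Rightarrow> (nat \<Rightarrow> 'a) measure" where
  "Om N = PiM {..<N} (\<lambda>_. P)"

lemma prob_Om: "prob_space (Om N)"
  unfolding Om_def by (rule prob_space_PiM) (rule prob_P)

lemma Om_nn_prod:
  assumes J: "J \<subseteq> {..<N}" and f: "\<And>j. j \<in> J \<Longrightarrow> f j \<in> borel_measurable P"
  shows "(\<integral>\<^sup>+\<omega>. (\<Prod>j\<in>J. f j (\<omega> j)) \<partial>Om N) = (\<Prod>j\<in>J. \<integral>\<^sup>+x. f j x \<partial>P)"
proof -
  interpret product_sigma_finite "\<lambda>_. P" by (intro product_sigma_finite.intro) (simp add: sigma_finite_measure_axioms)
  define g where "g j = (if j \<in> J then f j else (\<lambda>_. 1::ennreal))" for j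
  have fin: "finite J" using J finite_subset by blast
  have "(\<integral>\<^sup>+\<omega>. (\<Prod>j\<in>J. f j (\<omega> j)) \<partial>Om N) = (\<integral>\<^sup>+\<omega>. (\<Prod>j\<in>{..<N}. g j (\<omega> j)) \<partial>Om N)"
  proof (intro nn_integral_cong)
    fix \<omega>
    have "(\<Prod>j\<in>{..<N}. g j (\<omega> j)) = (\<Prod>j\<in>J. g j (\<omega> j))"
      using J fin by (intro prod.mono_neutral_right[of "{..<N}" J]) (auto simp: g_def)
    also have "\<dots> = (\<Prod>j\<in>J. f j (\<omega> j))" by (intro prod.cong) (auto simp: g_def)
    finally show "(\<Prod>j\<in>J. f j (\<omega> j)) = (\<Prod>j\<in>{..<N}. g j (\<omega> j))" by simp
  qed
  also have "\<dots> = (\<Prod>j\<in>{..<N}. \<integral>\<^sup>+x. g j x \<partial>P)"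
    unfolding Om_def by (rule product_nn_integral_prod) (auto simp: g_def f)
  also have "\<dots> = (\<Prod>j\<in>J. \<integral>\<^sup>+x. g j x \<partial>P)"
    using J fin by (intro prod.mono_neutral_right[of "{..<N}" J]) (auto simp: g_def emeasure_space_1)
  also have "\<dots> = (\<Prod>j\<in>J. \<integral>\<^sup>+x. f j x \<partial>P)" by (intro prod.cong) (auto simp: g_def)
  finally show ?thesis .
qed

lemma Om_component: "i < N \<Longrightarrow> distr (Om N) P (\<lambda>\<omega>. \<omega> i) = P"
  unfolding Om_def by (rule distr_PiM_component) (auto intro: prob_P)

lemma Om_comp_meas[measurable]: "i < N \<Longrightarrow> (\<lambda>\<omega>. \<omega> i) \<in> measurable (Om N) P"
  unfolding Om_def by measurable

lemma sets_Om[measurable_cong]: "sets (Om N) = sets (PiM {..<N} (\<lambda>_. P))" by (simp add: Om_def)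

lemma Om_nn_single:
  assumes "i < N" and [measurable]: "f \<in> borel_measurable P"
  shows "(\<integral>\<^sup>+\<omega>. f (\<omega> i) \<partial>Om N) = (\<integral>\<^sup>+x. f x \<partial>P)"
proof -
  have "(\<integral>\<^sup>+x. f x \<partial>P) = (\<integral>\<^sup>+x. f x \<partial>distr (Om N) P (\<lambda>\<omega>. \<omega> i))" using Om_component[OF assms(1)] by simp
  also have "\<dots> = (\<integral>\<^sup>+\<omega>. f (\<omega> i) \<partial>Om N)" using assms by (intro nn_integral_distr) auto
  finally show ?thesis by simp
qed

lemma Om_indep: assumes False: "N \<noteq> 0" shows "prob_space.indep_vars (Om N) (\<lambda>_. P) (\<lambda>i \<omega>. \<omega> i) {..<N}"
proof -
  interpret O: prob_space "Om N" by (rule prob_Om)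
  have ne: "{..<N} \<noteq> {}" using False by auto
  show ?thesis
  proof (subst O.indep_vars_iff_distr_eq_PiM'[OF ne])
    show "\<And>i. i \<in> {..<N} \<Longrightarrow> (\<lambda>\<omega>. \<omega> i) \<in> measurable (Om N) P" by simp
    have "distr (Om N) (\<Pi>\<^sub>M i\<in>{..<N}. P) (\<lambda>x. \<lambda>i\<in>{..<N}. x i) = distr (Om N) (Om N) (\<lambda>x. x)"
      by (intro distr_cong) (auto simp: Om_def space_PiM)
    also have "\<dots> = Om N" by simp
    also have "\<dots> = (\<Pi>\<^sub>M i\<in>{..<N}. distr (Om N) P (\<lambda>\<omega>. \<omega> i))"
      unfolding Om_def[of N] by (intro PiM_cong) (auto simp: Om_component[unfolded Om_def])
    finally show "distr (Om N) (\<Pi>\<^sub>M i\<in>{..<N}. P) (\<lambda>x. \<lambda>i\<in>{..<N}. x i) = (\<Pi>\<^sub>M i\<in>{..<N}. distr (Om N) P (\<lambda>\<omega>. \<omega> i))" .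
  qed
qed

lemma Om_distributed:
  assumes i: "i < N" and D: "distributed P lborel g f"
  shows "distributed (Om N) lborel (\<lambda>\<omega>. g (\<omega> i)) f"
proof -
  have g[measurable]: "g \<in> borel_measurable P" using D by (simp add: distributed_def)
  have "distr (Om N) lborel (\<lambda>\<omega>. g (\<omega> i)) = distr (distr (Om N) P (\<lambda>\<omega>. \<omega> i)) lborel g"
    using i by (subst distr_distr) (auto simp: comp_def)
  also have "\<dots> = distr P lborel g" using Om_component[OF i] by simp
  also have "\<dots> = density lborel f" using D by (simp add: distributed_def)
  finally show ?thesis using D i unfolding distributed_def by auto
qed

lemma T0_erlang:
  assumes m: "m = Suc k" and N: "N = n + m"
  shows "distributed (Om N) lborel (\<lambda>\<omega>. \<Sum>i<m. -2 * ln (U (\<omega> (n + i)))) (erlang_density k (1/2))"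
proof -
  interpret O: prob_space "Om N" by (rule prob_Om)
  define I where "I = (\<lambda>i. n + i) ` {..<m}"
  have I: "I \<subseteq> {..<N}" "finite I" "I \<noteq> {}" "card I = m"
    using m N by (auto simp: I_def card_image)
  have N0: "N \<noteq> 0" using N m by simp
  have ind: "O.indep_vars (\<lambda>_. borel) (\<lambda>j \<omega>. -2 * ln (U (\<omega> j))) I"
    using O.indep_vars_compose2[OF O.indep_vars_subset[OF Om_indep[OF N0] I(1)], of "\<lambda>_ x. -2 * ln (U x)" "\<lambda>_. borel"]
    by auto
  have ex: "distributed (Om N) lborel (\<lambda>\<omega>. -2 * ln (U (\<omega> j))) (exponential_density (1/2))" if "j \<in> I" for j
    using I(1) that by (intro Om_distributed[OF _ U_exp]) auto
  have "distributed (Om N) lborel (\<lambda>\<omega>. \<Sum>j\<in>I. -2 * ln (U (\<omega> j))) (erlang_density (card I - 1) (1/2))"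
    by (rule O.exponential_distributed_sum[OF I(2) I(3) _ ex ind]) simp
  moreover have "(\<lambda>\<omega>. \<Sum>j\<in>I. -2 * ln (U (\<omega> j))) = (\<lambda>\<omega>. \<Sum>i<m. -2 * ln (U (\<omega> (n + i))))"
    unfolding I_def by (subst sum.reindex) (auto simp: inj_on_def)
  ultimately show ?thesis using I(4) m by simp
qed

end

lemma chernoff_choice:
  fixes q c :: real assumes q: "0 \<le> q" and c: "0 \<le> c"
  shows "\<exists>l. 0 \<le> l \<and> l \<le> 1 \<and> - l * (c * sqrt q + c^2) + l^2 * q \<le> - (c^2 / 4)"
proof -
  define t where "t = c * sqrt q + c^2"
  have t0: "0 \<le> t" using q c by (simp add: t_def)
  have tc: "c^2 \<le> t" using q c by (simp add: t_def)
  show ?thesis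
  proof (cases "t \<le> 2 * q")
    case True
    show ?thesis
    proof (cases "q = 0")
      case True
      then have "t = 0" using \<open>t \<le> 2*q\<close> t0 by simp
      then have "c^2 \<le> 0" using tc by simp
      then have "c = 0" by simp
      then show ?thesis by (intro exI[of _ 0]) simp
    next
      case False
      then have qp: "q > 0" using q by simp
      define l where "l = t / (2 * q)"
      have l: "0 \<le> l" "l \<le> 1" using qp t0 True by (auto simp: l_def)
      have "- l * t + l^2 * q = - (t^2 / (4 * q))"
        using qp by (simp add: l_def power2_eq_square field_simps)
      also have "\<dots> \<le> - (c^2 / 4)"
      proof -
        have "c * sqrt q \<le> t" using c by (simp add: t_def)
        then have "(c * sqrt q)^2 \<le> t^2" using c q by (intro power_mono) auto
        then have "c^2 * q \<le> t^2" using q by (simp add: power_mult_distrib)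
        then have "c^2 / 4 \<le> t^2 / (4 * q)" using qp by (simp add: field_simps)
        then show ?thesis by simp
      qed
      finally show ?thesis using l unfolding t_def by blast
    qed
  next
    case False
    have c2: "0 \<le> c^2" by simp
    have "q - t \<le> - (c^2 / 4)" using False tc c2 by linarith
    then have "- 1 * t + 1^2 * q \<le> - (c^2 / 4)" by simp
    then show ?thesis unfolding t_def by (intro exI[of _ 1]) simp
  qed
qed

context setting
begin

lemma markov_prod:
  assumes J: "J \<subseteq> {..<N}" and Y[measurable]: "Y \<in> borel_measurable P" and l: "0 \<le> l"
    and c: "(\<integral>\<^sup>+x. ennreal (exp (l * Y x)) \<partial>P) \<le> ennreal c" and c0: "0 \<le> c"
  shows "measure (Om N) {\<omega>\<in>space (Om N). t \<le> (\<Sum>j\<in>J. Y (\<omega> j))} \<le> exp (- l * t) * c ^ card J"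
proof -
  interpret O: prob_space "Om N" by (rule prob_Om)
  have fin: "finite J" using J finite_subset by blast
  have [measurable]: "(\<lambda>\<omega>. \<Sum>j\<in>J. Y (\<omega> j)) \<in> borel_measurable (Om N)"
    using J by (intro borel_measurable_sum) auto
  have pm[measurable]: "(\<lambda>\<omega>. \<Prod>j\<in>J. ennreal (exp (l * Y (\<omega> j)))) \<in> borel_measurable (Om N)"
  proof (rule borel_measurable_prod_ennreal)
    fix j assume "j \<in> J"
    then have [simp]: "j < N" using J by auto
    show "(\<lambda>\<omega>. ennreal (exp (l * Y (\<omega> j)))) \<in> borel_measurable (Om N)" by measurable
  qed
  let ?A = "{\<omega>\<in>space (Om N). t \<le> (\<Sum>j\<in>J. Y (\<omega> j))}"
  have "emeasure (Om N) ?A = (\<integral>\<^sup>+\<omega>. indicator ?A \<omega> \<partial>Om N)"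
    by (simp add: nn_integral_indicator)
  also have "\<dots> \<le> (\<integral>\<^sup>+\<omega>. ennreal (exp (- l * t)) * (\<Prod>j\<in>J. ennreal (exp (l * Y (\<omega> j)))) \<partial>Om N)"
  proof (intro nn_integral_mono)
    fix \<omega> assume "\<omega> \<in> space (Om N)"
    have eq: "ennreal (exp (- l * t)) * (\<Prod>j\<in>J. ennreal (exp (l * Y (\<omega> j)))) = ennreal (exp (l * ((\<Sum>j\<in>J. Y (\<omega> j)) - t)))"
    proof -
      have "(\<Prod>j\<in>J. ennreal (exp (l * Y (\<omega> j)))) = ennreal (\<Prod>j\<in>J. exp (l * Y (\<omega> j)))"
        by (rule prod_ennreal) simp
      also have "(\<Prod>j\<in>J. exp (l * Y (\<omega> j))) = exp (\<Sum>j\<in>J. l * Y (\<omega> j))"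
        by (rule exp_sum[OF fin, symmetric])
      finally have "ennreal (exp (- l * t)) * (\<Prod>j\<in>J. ennreal (exp (l * Y (\<omega> j)))) = ennreal (exp (- l * t) * exp (\<Sum>j\<in>J. l * Y (\<omega> j)))"
        by (simp add: ennreal_mult)
      also have "exp (- l * t) * exp (\<Sum>j\<in>J. l * Y (\<omega> j)) = exp (l * ((\<Sum>j\<in>J. Y (\<omega> j)) - t))"
        by (simp add: exp_add[symmetric] sum_distrib_left right_diff_distrib)
      finally show ?thesis .
    qed
    show "indicator ?A \<omega> \<le> ennreal (exp (- l * t)) * (\<Prod>j\<in>J. ennreal (exp (l * Y (\<omega> j))))"
      unfolding eq using l by (auto simp: indicator_def)
  qed
  also have "\<dots> = ennreal (exp (- l * t)) * (\<integral>\<^sup>+\<omega>. (\<Prod>j\<in>J. ennreal (exp (l * Y (\<omega> j)))) \<partial>Om N)"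
    by (intro nn_integral_cmult pm)
  also have "(\<integral>\<^sup>+\<omega>. (\<Prod>j\<in>J. ennreal (exp (l * Y (\<omega> j)))) \<partial>Om N) = (\<Prod>j\<in>J. \<integral>\<^sup>+x. ennreal (exp (l * Y x)) \<partial>P)"
    by (rule Om_nn_prod[OF J]) auto
  also have "\<dots> \<le> (\<Prod>j\<in>J. ennreal c)"
    by (intro prod_mono_ennreal) (use c in auto)
  also have "\<dots> = ennreal (c ^ card J)" using c0 by (simp add: prod_ennreal ennreal_power)
  finally have "emeasure (Om N) ?A \<le> ennreal (exp (- l * t)) * ennreal (c ^ card J)"
    by (simp add: mult_left_mono)
  then have "emeasure (Om N) ?A \<le> ennreal (exp (- l * t) * c ^ card J)"
    by (simp add: ennreal_mult c0)
  then show ?thesis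
    by (simp add: O.emeasure_eq_measure c0)
qed

lemma nn_integral_indicator_fun:
  assumes E[measurable]: "E \<in> sets P" and that: "0 \<le> g 0" "0 \<le> g 1"
  shows "(\<integral>\<^sup>+x. ennreal (g (indicator E x :: real)) \<partial>P) = ennreal (g 1 * prob E + g 0 * (1 - prob E))"
proof -
  have "(\<integral>\<^sup>+x. ennreal (g (indicator E x :: real)) \<partial>P) =
        (\<integral>\<^sup>+x. ennreal (g 1) * indicator E x + ennreal (g 0) * indicator (space P - E) x \<partial>P)"
    by (intro nn_integral_cong) (auto simp: indicator_def)
  also have "\<dots> = ennreal (g 1) * emeasure P E + ennreal (g 0) * emeasure P (space P - E)"
    by (subst nn_integral_add) (auto simp: nn_integral_cmult_indicator)
  also have "\<dots> = ennreal (g 1 * prob E + g 0 * (1 - prob E))"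
    using that by (simp add: emeasure_eq_measure prob_compl ennreal_mult[symmetric] ennreal_plus[symmetric] del: ennreal_plus)
  finally show ?thesis .
qed

lemma bernoulli_mgf:
  assumes E: "E \<in> sets P" and a: "\<bar>a\<bar> \<le> 1"
  shows "(\<integral>\<^sup>+x. ennreal (exp (a * (indicator E x - prob E))) \<partial>P) \<le> ennreal (exp (a^2 * prob E))"
proof -
  define p where "p = prob E"
  have p: "0 \<le> p" "p \<le> 1" by (auto simp: p_def)
  have "(\<integral>\<^sup>+x. ennreal (exp (a * (indicator E x - prob E))) \<partial>P) = ennreal (exp (a * (1 - p)) * p + exp (a * (0 - p)) * (1 - p))"
    using nn_integral_indicator_fun[OF E, of "\<lambda>y. exp (a * (y - p))"] by (simp add: p_def)
  also have "\<dots> \<le> ennreal (exp (a^2 * p))"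
  proof (intro ennreal_leI)
    have b1: "a * (1 - p) \<le> 1"
    proof -
      have "\<bar>a * (1 - p)\<bar> \<le> 1 * 1" unfolding abs_mult using a p by (intro mult_mono) auto
      then show ?thesis by simp
    qed
    have b2: "a * (0 - p) \<le> 1"
    proof -
      have "\<bar>a * (0 - p)\<bar> \<le> 1 * 1" unfolding abs_mult using a p by (intro mult_mono) auto
      then show ?thesis by simp
    qed
    have "exp (a * (1 - p)) * p + exp (a * (0 - p)) * (1 - p) \<le>
          (1 + a * (1 - p) + (a * (1 - p))^2) * p + (1 + a * (0 - p) + (a * (0 - p))^2) * (1 - p)"
      using p by (intro add_mono mult_right_mono exp_le_quad b1 b2) auto
    also have "\<dots> = 1 + a^2 * p * (1 - p)" by (simp add: power2_eq_square algebra_simps)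
    also have "\<dots> \<le> 1 + a^2 * p" using p by (simp add: mult_left_le)
    also have "\<dots> \<le> exp (a^2 * p)" by (rule exp_ge_add_one_self)
    finally show "exp (a * (1 - p)) * p + exp (a * (0 - p)) * (1 - p) \<le> exp (a^2 * p)" .
  qed
  finally show ?thesis by (simp add: p_def)
qed


lemma binom_tail:
  assumes E[measurable]: "E \<in> sets P" and J: "J \<subseteq> {..<N}" and c: "0 \<le> c" and sg: "\<bar>\<sigma>\<bar> = 1"
  shows "measure (Om N) {\<omega>\<in>space (Om N). c * sqrt (card J * prob E) + c^2 \<le>
            \<sigma> * ((\<Sum>j\<in>J. indicator E (\<omega> j)) - card J * prob E)} \<le> exp (- (c^2 / 4))"
proof -
  define p where "p = prob E"
  define n where "n = card J"
  have p: "0 \<le> p" by (simp add: p_def)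
  obtain l where l: "0 \<le> l" "l \<le> 1" "- l * (c * sqrt (n * p) + c^2) + l^2 * (n * p) \<le> - (c^2 / 4)"
    using chernoff_choice[of "n * p" c] p c by auto
  define Y where "Y x = \<sigma> * (indicator E x - p)" for x
  have Ym[measurable]: "Y \<in> borel_measurable P" unfolding Y_def[abs_def] by measurable
  have fin: "finite J" using J finite_subset by blast
  have sumY: "(\<Sum>j\<in>J. Y (\<omega> j)) = \<sigma> * ((\<Sum>j\<in>J. indicator E (\<omega> j)) - n * p)" for \<omega>
    by (simp add: Y_def sum_distrib_left[symmetric] sum_subtractf n_def)
  have mgf: "(\<integral>\<^sup>+x. ennreal (exp (l * Y x)) \<partial>P) \<le> ennreal (exp (l^2 * p))"
  proof -
    have a: "\<bar>l * \<sigma>\<bar> \<le> 1" using l sg by (simp add: abs_mult)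
    have "(\<integral>\<^sup>+x. ennreal (exp (l * Y x)) \<partial>P) = (\<integral>\<^sup>+x. ennreal (exp ((l * \<sigma>) * (indicator E x - prob E))) \<partial>P)"
      by (simp add: Y_def p_def mult.assoc)
    also have "\<dots> \<le> ennreal (exp ((l * \<sigma>)^2 * prob E))" by (rule bernoulli_mgf[OF E a])
    also have "(l * \<sigma>)^2 = l^2"
    proof -
      have "\<sigma>^2 = \<bar>\<sigma>\<bar>^2" by simp
      then have "\<sigma>^2 = 1" using sg by simp
      then show ?thesis by (simp add: power_mult_distrib)
    qed
    finally show ?thesis by (simp add: p_def)
  qed
  have "measure (Om N) {\<omega>\<in>space (Om N). c * sqrt (n * p) + c^2 \<le> (\<Sum>j\<in>J. Y (\<omega> j))}
        \<le> exp (- l * (c * sqrt (n * p) + c^2)) * exp (l^2 * p) ^ card J"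
    by (rule markov_prod[OF J Ym l(1) mgf]) simp
  also have "\<dots> = exp (- l * (c * sqrt (n * p) + c^2) + l^2 * (n * p))"
  proof -
    have "exp (l^2 * p) ^ card J = exp (l^2 * (n * p))"
      by (simp add: n_def exp_of_nat_mult[symmetric] mult_ac)
    then show ?thesis by (simp add: mult_exp_exp)
  qed
  also have "\<dots> \<le> exp (- (c^2 / 4))" using l(3) by simp
  finally show ?thesis unfolding sumY by (simp add: n_def p_def)
qed

end

lemma sum_indicator_card:
  fixes n :: nat shows "(\<Sum>j<n. (indicator E (\<omega> j) :: real)) = real (card {j. j < n \<and> \<omega> j \<in> E})"
proof -
  have "(\<Sum>j<n. (indicator E (\<omega> j) :: real)) = (\<Sum>j\<in>{j. j < n \<and> \<omega> j \<in> E}. 1)"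
    by (rule sum.mono_neutral_cong_right) (auto simp: indicator_def)
  then show ?thesis by simp
qed

context setting
begin

lemma meas_sum_Om[measurable]:
  fixes n N :: nat and g :: "'a \<Rightarrow> real"
  assumes "n \<le> N" and [measurable]: "g \<in> borel_measurable P"
  shows "(\<lambda>\<omega>. \<Sum>j<n. g (\<omega> j)) \<in> borel_measurable (Om N)"
proof (rule borel_measurable_sum)
  fix j assume "j \<in> {..<n}"
  then have [simp]: "j < N" using assms by auto
  show "(\<lambda>\<omega>. g (\<omega> j)) \<in> borel_measurable (Om N)" by measurable
qed

definition cle :: "nat \<Rightarrow> (nat \<Rightarrow> 'a) \<Rightarrow> real \<Rightarrow> real" where
  "cle n \<omega> v = real (card {j. j < n \<and> \<omega> j \<in> {x\<in>space P. U x \<le> v}})"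
definition clt :: "nat \<Rightarrow> (nat \<Rightarrow> 'a) \<Rightarrow> real \<Rightarrow> real" where
  "clt n \<omega> v = real (card {j. j < n \<and> \<omega> j \<in> {x\<in>space P. U x < v}})"

lemma cle_sum: "cle n \<omega> v = (\<Sum>j<n. indicator {x\<in>space P. U x \<le> v} (\<omega> j))"
  unfolding cle_def sum_indicator_card ..
lemma clt_sum: "clt n \<omega> v = (\<Sum>j<n. indicator {x\<in>space P. U x < v} (\<omega> j))"
  unfolding clt_def sum_indicator_card ..

lemma cle_meas[measurable]: "n \<le> N \<Longrightarrow> (\<lambda>\<omega>. cle n \<omega> v) \<in> borel_measurable (Om N)"
  unfolding cle_sum by measurable
lemma clt_meas[measurable]: "n \<le> N \<Longrightarrow> (\<lambda>\<omega>. clt n \<omega> v) \<in> borel_measurable (Om N)"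
  unfolding clt_sum by measurable

definition Bad :: "nat \<Rightarrow> nat \<Rightarrow> real \<Rightarrow> (nat \<Rightarrow> 'a) set" where
  "Bad n N c = (\<Union>k\<in>{..n}. {\<omega>\<in>space (Om N). c * sqrt (real k) + c^2 \<le> cle n \<omega> (k/n) - k}
                        \<union> {\<omega>\<in>space (Om N). c * sqrt (real k) + c^2 \<le> - (clt n \<omega> (k/n) - k)})"

lemma Bad_meas: "n \<le> N \<Longrightarrow> Bad n N c \<in> sets (Om N)"
  unfolding Bad_def by measurable

lemma Bad_prob:
  assumes n: "0 < n" "n \<le> N" and c: "0 \<le> c"
  shows "measure (Om N) (Bad n N c) \<le> 2 * (real n + 1) * exp (- (c^2 / 4))"
proof -
  interpret O: prob_space "Om N" by (rule prob_Om)
  have J: "{..<n} \<subseteq> {..<N}" using n by auto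
  have A: "measure (Om N) {\<omega>\<in>space (Om N). c * sqrt (real k) + c^2 \<le> cle n \<omega> (k/n) - k} \<le> exp (- (c^2 / 4))"
    if k: "k \<in> {..n}" for k
  proof -
    define E where "E = {x\<in>space P. U x \<le> k/n}"
    have E[measurable]: "E \<in> sets P" unfolding E_def by measurable
    have pE: "prob E = k / n" unfolding E_def using k n by (intro U_le) auto
    have nk: "real (card {..<n}) * prob E = k" using pE n by simp
    have "measure (Om N) {\<omega>\<in>space (Om N). c * sqrt (real k) + c^2 \<le> cle n \<omega> (k/n) - k}
       = measure (Om N) {\<omega>\<in>space (Om N). c * sqrt (card {..<n} * prob E) + c^2 \<le>
            1 * ((\<Sum>j\<in>{..<n}. indicator E (\<omega> j)) - card {..<n} * prob E)}"
      unfolding nk by (simp add: cle_sum E_def)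
    also have "\<dots> \<le> exp (- (c^2 / 4))" by (rule binom_tail[OF E J c]) simp
    finally show ?thesis .
  qed
  have B: "measure (Om N) {\<omega>\<in>space (Om N). c * sqrt (real k) + c^2 \<le> - (clt n \<omega> (k/n) - k)} \<le> exp (- (c^2 / 4))"
    if k: "k \<in> {..n}" for k
  proof -
    define E where "E = {x\<in>space P. U x < k/n}"
    have E[measurable]: "E \<in> sets P" unfolding E_def by measurable
    have pE: "prob E = k / n" unfolding E_def using k n by (intro U_less) auto
    have nk: "real (card {..<n}) * prob E = k" using pE n by simp
    have "measure (Om N) {\<omega>\<in>space (Om N). c * sqrt (real k) + c^2 \<le> - (clt n \<omega> (k/n) - k)}
       = measure (Om N) {\<omega>\<in>space (Om N). c * sqrt (card {..<n} * prob E) + c^2 \<le>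
            (-1) * ((\<Sum>j\<in>{..<n}. indicator E (\<omega> j)) - card {..<n} * prob E)}"
      unfolding nk by (simp add: clt_sum E_def)
    also have "\<dots> \<le> exp (- (c^2 / 4))" by (rule binom_tail[OF E J c]) simp
    finally show ?thesis .
  qed
  have "measure (Om N) (Bad n N c) \<le> (\<Sum>k\<in>{..n}. measure (Om N) ({\<omega>\<in>space (Om N). c * sqrt (real k) + c^2 \<le> cle n \<omega> (k/n) - k}
                        \<union> {\<omega>\<in>space (Om N). c * sqrt (real k) + c^2 \<le> - (clt n \<omega> (k/n) - k)}))"
    unfolding Bad_def using n by (intro O.finite_measure_subadditive_finite) auto
  also have "\<dots> \<le> (\<Sum>k\<in>{..n}. 2 * exp (- (c^2 / 4)))"
  proof (intro sum_mono)
    fix k assume k: "k \<in> {..n}"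
    have "measure (Om N) ({\<omega>\<in>space (Om N). c * sqrt (real k) + c^2 \<le> cle n \<omega> (k/n) - k}
                        \<union> {\<omega>\<in>space (Om N). c * sqrt (real k) + c^2 \<le> - (clt n \<omega> (k/n) - k)})
          \<le> measure (Om N) {\<omega>\<in>space (Om N). c * sqrt (real k) + c^2 \<le> cle n \<omega> (k/n) - k}
           + measure (Om N) {\<omega>\<in>space (Om N). c * sqrt (real k) + c^2 \<le> - (clt n \<omega> (k/n) - k)}"
      using n by (intro measure_Un_le) auto
    also have "\<dots> \<le> 2 * exp (- (c^2 / 4))" using A[OF k] B[OF k] by simp
    finally show "measure (Om N) ({\<omega>\<in>space (Om N). c * sqrt (real k) + c^2 \<le> cle n \<omega> (k/n) - k}
                        \<union> {\<omega>\<in>space (Om N). c * sqrt (real k) + c^2 \<le> - (clt n \<omega> (k/n) - k)}) \<le> 2 * exp (- (c^2 / 4))" .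
  qed
  also have "\<dots> = 2 * (real n + 1) * exp (- (c^2 / 4))" by simp
  finally show ?thesis .
qed

end

lemma min_lip: "\<bar>min (a::real) 1 - min b 1\<bar> \<le> \<bar>a - b\<bar>"
  by (simp add: min_def abs_if)

lemma log_close:
  fixes u v e b :: real
  assumes v: "0 \<le> v" "v \<le> 1" and e: "0 < e" "e \<le> 1" and ub: "\<bar>u - v\<bar> \<le> b" and b: "b \<le> (v + e) / 2"
  shows "\<bar>ln (min (u + e) 1) - ln (min (v + e) 1)\<bar> \<le> 2 * b / (v + e)"
proof -
  define a where "a = min (u + e) 1"
  define a' where "a' = min (v + e) 1"
  have ve: "0 < v + e" "(v + e) / 2 \<le> 1" using v e by auto
  have d: "\<bar>a - a'\<bar> \<le> b" unfolding a_def a'_def using min_lip[of "u+e" "v+e"] ub by simp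
  have "u + e \<ge> (v + e) / 2" using ub b by (simp add: abs_le_iff) 
  then have al: "(v + e) / 2 \<le> a" unfolding a_def using ve by simp
  have al': "(v + e) / 2 \<le> a'" unfolding a'_def using ve v by simp
  have mpos: "0 < (v + e) / 2" using ve by simp
  have "\<bar>ln a - ln a'\<bar> \<le> \<bar>a - a'\<bar> / min a a'"
    by (rule abs_ln_diff_le) (use al al' mpos in auto)
  also have "\<dots> \<le> b / ((v + e) / 2)"
    by (rule frac_le) (use d al al' mpos in auto)
  also have "\<dots> = 2 * b / (v + e)" by simp
  finally show ?thesis by (simp add: a_def a'_def)
qed

lemma amgm_sqrt:
  fixes c v n :: real assumes "0 \<le> v" "0 < n"
  shows "c * sqrt (v / n) \<le> v / 2 + c^2 / (2 * n)"
proof -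
  have "0 \<le> (sqrt v - c / sqrt n)^2" by simp
  also have "(sqrt v - c / sqrt n)^2 = v - 2 * (c * sqrt (v / n)) + c^2 / n"
    using assms by (simp add: power2_eq_square field_simps real_sqrt_divide)
  finally show ?thesis by (simp add: field_simps)
qed

lemma beta_small:
  fixes c v n e :: real assumes "0 \<le> v" "0 < n" "0 \<le> c" and ce: "(3 * c^2 + 2 * c + 4) / n \<le> e"
  shows "c * sqrt (v / n) + (c^2 + c + 2) / n \<le> (v + e) / 2"
proof -
  have "c * sqrt (v / n) \<le> v / 2 + c^2 / (2 * n)" by (rule amgm_sqrt) (use assms in auto)
  moreover have "c^2 / (2 * n) + (c^2 + c + 2) / n = ((3 * c^2 + 2 * c + 4) / n) / 2"
    using assms by (simp add: field_simps)
  moreover have "(v + e) / 2 = v / 2 + e / 2" by simp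
  moreover have "((3 * c^2 + 2 * c + 4) / n) / 2 \<le> e / 2" by (rule divide_right_mono[OF ce]) simp
  ultimately show ?thesis by linarith
qed

lemma u_close:
  fixes K v c :: real and n :: nat
  assumes n: "0 < n" and v: "0 \<le> v" and K: "\<bar>K - n * v\<bar> \<le> c * sqrt (n * v) + c^2 + c + 1" and v1: "v \<le> 1"
  shows "\<bar>(1 + K) / (n + 1) - v\<bar> \<le> c * sqrt (v / n) + (c^2 + c + 2) / n"
proof -
  define D where "D = c * sqrt (n * v) + c^2 + c + 1"
  have "(1 + K) / (n + 1) - v = ((K - n * v) + (1 - v)) / (n + 1)"
    by (simp add: field_simps)
  then have "\<bar>(1 + K) / (n + 1) - v\<bar> = \<bar>(K - n * v) + (1 - v)\<bar> / (n + 1)" by simp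
  also have "\<dots> \<le> (D + 1) / (n + 1)"
    using K v v1 unfolding D_def by (intro divide_right_mono) auto
  also have "\<dots> \<le> (D + 1) / n"
  proof -
    have "0 \<le> D + 1" using K unfolding D_def by linarith
    then show ?thesis using n by (intro divide_left_mono) auto
  qed
  also have "(D + 1) / n = c * (sqrt (n * v) / n) + (c^2 + c + 2) / n"
    unfolding D_def using n by (simp add: field_simps)
  also have "sqrt (n * v) / n = sqrt (v / n)"
    using n v by (simp add: real_sqrt_divide real_sqrt_mult field_simps)
  finally show ?thesis .
qed

context setting
begin

lemma space_Om_comp: "\<omega> \<in> space (Om N) \<Longrightarrow> j < N \<Longrightarrow> \<omega> j \<in> space P"
  by (auto simp: Om_def space_PiM)

definition Kc :: "nat \<Rightarrow> (nat \<Rightarrow> 'a) \<Rightarrow> 'a \<Rightarrow> real" where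
  "Kc n \<omega> x = real (card {j. j < n \<and> s (\<omega> j) \<le> s x})"

lemma good_count:
  assumes n: "0 < n" "n \<le> N" and c: "0 \<le> c" and \<omega>: "\<omega> \<in> space (Om N) - Bad n N c"
  shows "\<bar>Kc n \<omega> x - n * U x\<bar> \<le> c * sqrt (n * U x) + c^2 + c + 1"
proof -
  define v where "v = U x"
  have v: "0 \<le> v" "v \<le> 1" using U_bounds by (auto simp: v_def)
  have om: "\<omega> \<in> space (Om N)" using \<omega> by simp
  have nb: "\<And>k. k \<le> n \<Longrightarrow> cle n \<omega> (k/n) - k < c * sqrt (real k) + c^2"
            "\<And>k. k \<le> n \<Longrightarrow> - (clt n \<omega> (k/n) - k) < c * sqrt (real k) + c^2"
    using \<omega> unfolding Bad_def by (auto simp: not_le)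
  have fin: "finite {j. j < n \<and> P' j}" for P' by simp
  have low1: "clt n \<omega> v \<le> Kc n \<omega> x"
    unfolding clt_def Kc_def v_def
  proof (intro of_nat_mono card_mono, simp, safe)
    fix j assume "j < n" "U (\<omega> j) < U x"
    then show "s (\<omega> j) \<le> s x" unfolding U_def using Fs_mono[of "s x" "s (\<omega> j)"] by (cases "s (\<omega> j) \<le> s x") auto
  qed
  define k where "k = nat (floor (n * v))"
  have nv0: "0 \<le> n * v" using v by simp
  have nvn: "n * v \<le> n" using v n by (simp add: mult_left_le)
  have rk: "real k = of_int (floor (n * v))" unfolding k_def using nv0 by simp
  have k: "k \<le> n" "real k \<le> n * v" "n * v < real k + 1"
  proof -
    show "real k \<le> n * v" unfolding rk by (rule of_int_floor_le)
    then show "k \<le> n" using nvn by linarith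
    show "n * v < real k + 1" unfolding rk by linarith
  qed
  have low2: "clt n \<omega> (k/n) \<le> clt n \<omega> v"
  proof -
    have "k / n \<le> v" using k n by (simp add: field_simps)
    then show ?thesis unfolding clt_def by (intro of_nat_mono card_mono) auto
  qed
  have sk: "sqrt (real k) \<le> sqrt (n * v)" using k by simp
  have lower: "n * v - Kc n \<omega> x \<le> c * sqrt (n * v) + c^2 + 1"
  proof -
    have "- (clt n \<omega> (k/n) - k) < c * sqrt (real k) + c^2" by (rule nb(2)[OF k(1)])
    moreover have "c * sqrt (real k) \<le> c * sqrt (n * v)" using sk c by (rule mult_left_mono)
    ultimately show ?thesis using low1 low2 k by linarith
  qed
  have up1: "Kc n \<omega> x \<le> cle n \<omega> v"
    unfolding cle_def Kc_def v_def
  proof (intro of_nat_mono card_mono, simp, safe)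
    fix j assume "j < n" "s (\<omega> j) \<le> s x"
    then show "\<omega> j \<in> space P" using space_Om_comp[OF om, of j] n by simp
    show "U (\<omega> j) \<le> U x" unfolding U_def using Fs_mono \<open>s (\<omega> j) \<le> s x\<close> by simp
  qed
  define k' where "k' = nat (ceiling (n * v))"
  have k': "k' \<le> n" "n * v \<le> real k'" "real k' < n * v + 1"
  proof -
    have nv: "n * v \<le> n" using v n by (simp add: mult_left_le)
    show "k' \<le> n" unfolding k'_def using nv by (simp add: nat_le_iff ceiling_le_iff)
    show "n * v \<le> real k'" unfolding k'_def using v by (simp add: real_nat_ceiling_ge)
    show "real k' < n * v + 1" unfolding k'_def using v by (simp add: ceiling_less_cancel)
  qed
  have up2: "cle n \<omega> v \<le> cle n \<omega> (k'/n)"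
  proof -
    have "v \<le> k' / n" using k' n by (simp add: field_simps)
    then show ?thesis unfolding cle_def by (intro of_nat_mono card_mono) auto
  qed
  have sk': "sqrt (real k') \<le> sqrt (n * v) + 1"
  proof -
    have "sqrt (real k') \<le> sqrt (n * v + 1)" using k' by simp
    also have "\<dots> \<le> sqrt (n * v) + sqrt 1" by (rule sqrt_add_le_add_sqrt) (use v in auto)
    finally show ?thesis by simp
  qed
  have upper: "Kc n \<omega> x - n * v \<le> c * sqrt (n * v) + c^2 + c + 1"
  proof -
    have "cle n \<omega> (k'/n) - k' < c * sqrt (real k') + c^2" by (rule nb(1)[OF k'(1)])
    moreover have "c * sqrt (real k') \<le> c * (sqrt (n * v) + 1)" using sk' c by (rule mult_left_mono)
    ultimately show ?thesis using up1 up2 k' by (simp add: algebra_simps)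
  qed
  have "0 \<le> c * sqrt (n * v)" using c v by simp
  then show ?thesis using lower upper c unfolding v_def[symmetric] by (simp add: abs_le_iff)
qed

end

lemma nn_FTC:
  fixes F f :: "real \<Rightarrow> real"
  assumes ab: "a \<le> b" and F: "\<And>x. a \<le> x \<Longrightarrow> x \<le> b \<Longrightarrow> (F has_real_derivative f x) (at x)"
    and f0: "\<And>x. a \<le> x \<Longrightarrow> x \<le> b \<Longrightarrow> 0 \<le> f x"
  shows "(\<integral>\<^sup>+x. ennreal (f x) * indicator {a..b} x \<partial>lborel) = ennreal (F b - F a)"
proof (rule nn_integral_has_integral_lebesgue')
  show "\<And>x. x \<in> {a..b} \<Longrightarrow> 0 \<le> f x" using f0 by auto
  show "(f has_integral F b - F a) {a..b}"
  proof (rule fundamental_theorem_of_calculus[OF ab])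
    fix x assume "x \<in> {a..b}"
    then have "(F has_real_derivative f x) (at x within {a..b})" using F by (auto intro: has_field_derivative_at_within)
    then show "(F has_vector_derivative f x) (at x within {a..b})"
      by (simp add: has_real_derivative_iff_has_vector_derivative)
  qed
qed

lemma integral_A:
  fixes e :: real assumes e: "0 < e" "e < 1"
  shows "(\<integral>\<^sup>+v. ennreal (- 2 * ln (min (v + e) 1)) * indicator {0..1} v \<partial>lborel) = ennreal (2 - 2 * e + 2 * e * ln e)"
proof -
  have "(\<integral>\<^sup>+v. ennreal (- 2 * ln (min (v + e) 1)) * indicator {0..1} v \<partial>lborel) =
        (\<integral>\<^sup>+v. ennreal (- 2 * ln (v + e)) * indicator {0..1-e} v \<partial>lborel)"
    using e by (intro nn_integral_cong) (auto simp: indicator_def min_def)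
  also have "\<dots> = ennreal ((\<lambda>v. - 2 * ((v + e) * ln (v + e) - v)) (1 - e) - (\<lambda>v. - 2 * ((v + e) * ln (v + e) - v)) 0)"
  proof (rule nn_FTC)
    show "0 \<le> 1 - e" using e by simp
    fix x assume x: "0 \<le> x" "x \<le> 1 - e"
    show "((\<lambda>v. - 2 * ((v + e) * ln (v + e) - v)) has_real_derivative - 2 * ln (x + e)) (at x)"
      using x e by (auto intro!: derivative_eq_intros)
    have "ln (x + e) \<le> 0" using x e by simp
    then show "0 \<le> - 2 * ln (x + e)" by simp
  qed
  also have "(\<lambda>v. - 2 * ((v + e) * ln (v + e) - v)) (1 - e) - (\<lambda>v. - 2 * ((v + e) * ln (v + e) - v)) 0 = 2 - 2 * e + 2 * e * ln e"
    by simp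
  finally show ?thesis .
qed

lemma integral_B:
  fixes e :: real assumes e: "0 < e" "e < 1"
  shows "(\<integral>\<^sup>+v. ennreal (1 / sqrt (v + e)) * indicator {0..1} v \<partial>lborel) \<le> ennreal 3"
proof -
  have "(\<integral>\<^sup>+v. ennreal (1 / sqrt (v + e)) * indicator {0..1} v \<partial>lborel) = ennreal ((\<lambda>v. 2 * sqrt (v + e)) 1 - (\<lambda>v. 2 * sqrt (v + e)) 0)"
  proof (rule nn_FTC)
    fix x :: real assume x: "0 \<le> x" "x \<le> 1"
    show "((\<lambda>v. 2 * sqrt (v + e)) has_real_derivative 1 / sqrt (x + e)) (at x)"
      using x e by (auto intro!: derivative_eq_intros simp: field_simps)
  qed (use e in auto)
  also have "\<dots> \<le> ennreal 3"
  proof (intro ennreal_leI)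
    have "sqrt (1 + e) \<le> sqrt 2" using e by simp
    also have "sqrt 2 \<le> (3/2::real)" by (rule real_le_lsqrt) (auto simp: power2_eq_square)
    finally have "sqrt (1 + e) \<le> 3/2" .
    moreover have "0 \<le> sqrt e" using e by simp
    ultimately have s: "2 * sqrt (1 + e) - 2 * sqrt e \<le> 3" by linarith
    then show "(\<lambda>v. 2 * sqrt (v + e)) 1 - (\<lambda>v. 2 * sqrt (v + e)) 0 \<le> 3" by (simp add: add.commute)
  qed
  finally show ?thesis .
qed

lemma integral_C:
  fixes e :: real assumes e: "0 < e" "e < 1"
  shows "(\<integral>\<^sup>+v. ennreal (1 / (v + e)) * indicator {0..1} v \<partial>lborel) = ennreal (ln (1 + e) - ln e)"
proof -
  have "(\<integral>\<^sup>+v. ennreal (1 / (v + e)) * indicator {0..1} v \<partial>lborel) = ennreal ((\<lambda>v. ln (v + e)) 1 - (\<lambda>v. ln (v + e)) 0)"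
  proof (rule nn_FTC)
    fix x :: real assume x: "0 \<le> x" "x \<le> 1"
    show "((\<lambda>v. ln (v + e)) has_real_derivative 1 / (x + e)) (at x)"
      using x e by (auto intro!: derivative_eq_intros simp: field_simps)
  qed (use e in auto)
  then show ?thesis by (simp add: add.commute)
qed

definition bet :: "nat \<Rightarrow> real \<Rightarrow> real \<Rightarrow> real" where
  "bet n c v = c * sqrt (v / n) + (c^2 + c + 2) / n"
definition Zf :: "nat \<Rightarrow> real \<Rightarrow> real \<Rightarrow> real \<Rightarrow> real" where
  "Zf n c e v = - 2 * ln (min (v + e) 1) + 4 * bet n c v / (v + e)"
definition rhof :: "nat \<Rightarrow> real \<Rightarrow> real \<Rightarrow> real \<Rightarrow> real" where
  "rhof n c e v = (if v \<le> 0 then 0 else 2 * (ln (min (v + e) 1) - ln v) + 4 * bet n c v / (v + e))"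

lemma bet_meas[measurable]: "bet n c \<in> borel_measurable borel" unfolding bet_def[abs_def] by measurable
lemma Zf_meas[measurable]: "Zf n c e \<in> borel_measurable borel" unfolding Zf_def[abs_def] by measurable
lemma rhof_meas[measurable]: "rhof n c e \<in> borel_measurable borel" unfolding rhof_def[abs_def] by measurable

lemma bet_split:
  fixes v e c :: real assumes "0 \<le> v" "0 < e" "0 < n" "0 \<le> c"
  shows "4 * bet n c v / (v + e) \<le> (4 * c / sqrt n) * (1 / sqrt (v + e)) + (4 * (c^2 + c + 2) / n) * (1 / (v + e))"
proof -
  define a where "a = sqrt v"
  define b where "b = sqrt (v + e)"
  define r where "r = sqrt n"
  have ab: "a \<le> b" using assms by (simp add: a_def b_def)
  have b0: "0 < b" using assms by (simp add: b_def)
  have r0: "0 < r" using assms by (simp add: r_def)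
  have bb: "v + e = b * b" using assms by (simp add: b_def)
  have svn: "sqrt (v / n) = a / r" by (simp add: a_def r_def real_sqrt_divide)
  have "(a / r) / (b * b) \<le> (b / r) / (b * b)"
    using ab r0 b0 by (intro divide_right_mono) auto
  also have "(b / r) / (b * b) = (1 / r) * (1 / b)" using b0 r0 by simp
  finally have k1: "sqrt (v / n) / (v + e) \<le> (1 / r) * (1 / b)" unfolding svn bb .
  have "4 * bet n c v / (v + e) = 4 * c * (sqrt (v / n) / (v + e)) + (4 * (c^2 + c + 2) / n) * (1 / (v + e))"
    unfolding bet_def by (simp add: add_divide_distrib distrib_left)
  also have "\<dots> \<le> 4 * c * ((1 / r) * (1 / b)) + (4 * (c^2 + c + 2) / n) * (1 / (v + e))"
    using k1 assms by (intro add_mono mult_left_mono) auto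
  also have "4 * c * ((1 / r) * (1 / b)) = (4 * c / sqrt n) * (1 / sqrt (v + e))" by (simp add: r_def b_def)
  finally show ?thesis .
qed


lemma Zf_parts:
  assumes v: "0 \<le> v" "v \<le> 1" and e: "0 < e" "e < 1" and n: "0 < n" and c: "0 \<le> c"
    and ce: "(3 * c^2 + 2 * c + 4) / n \<le> e"
  shows "0 \<le> - 2 * ln (min (v + e) 1)" "- 2 * ln (min (v + e) 1) \<le> - 2 * ln e"
        "0 \<le> 4 * bet n c v / (v + e)" "4 * bet n c v / (v + e) \<le> 2"
        "0 < v \<Longrightarrow> - 2 * ln (min (v + e) 1) \<le> - 2 * ln v"
proof -
  have ve: "0 < v + e" using v e by simp
  show "0 \<le> - 2 * ln (min (v + e) 1)" using ve by simp
  have "e \<le> min (v + e) 1" using v e by simp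
  then have "ln e \<le> ln (min (v + e) 1)" using e by simp
  then show "- 2 * ln (min (v + e) 1) \<le> - 2 * ln e" by simp
  have b0: "0 \<le> bet n c v" unfolding bet_def using v n c by simp
  then show "0 \<le> 4 * bet n c v / (v + e)" using ve by simp
  have "bet n c v \<le> (v + e) / 2" unfolding bet_def by (rule beta_small) (use v n c ce in auto)
  then have "4 * bet n c v \<le> 2 * (v + e)" by simp
  then show "4 * bet n c v / (v + e) \<le> 2" using ve by (simp add: divide_le_eq)
  assume "0 < v"
  then have "ln v \<le> ln (min (v + e) 1)" using v e by simp
  then show "- 2 * ln (min (v + e) 1) \<le> - 2 * ln v" by simp
qed

lemma Zf_nonneg:
  assumes "0 \<le> v" "v \<le> 1" "0 < e" "0 < n" "0 \<le> c" shows "0 \<le> Zf n c e v"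
proof -
  have ve: "0 < v + e" using assms by simp
  have a: "0 \<le> - 2 * ln (min (v + e) 1)" using ve by simp
  have "0 \<le> bet n c v" unfolding bet_def using assms by simp
  then have b: "0 \<le> 4 * bet n c v / (v + e)" using ve by simp
  show ?thesis unfolding Zf_def using a b by linarith
qed

lemma ln_lower_e: "0 < e \<Longrightarrow> e - 1 \<le> e * ln (e::real)"
proof -
  assume e: "0 < e"
  have "ln (1/e) \<le> 1/e - 1" using ln_le_minus_one[of "1/e"] e by simp
  then have "1 - 1/e \<le> ln e" using e by (simp add: ln_div)
  then have "e * (1 - 1/e) \<le> e * ln e" using e by (intro mult_left_mono) auto
  then show ?thesis using e by (simp add: right_diff_distrib)
qed

lemma EA_nonneg: "0 < e \<Longrightarrow> 0 \<le> 2 - 2 * e + 2 * e * ln (e::real)"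
  using ln_lower_e[of e] by linarith

context setting
begin

lemma nn_U:
  assumes [measurable]: "g \<in> borel_measurable borel"
  shows "(\<integral>\<^sup>+x. ennreal (g (U x)) \<partial>P) = (\<integral>\<^sup>+v. ennreal (g v) * indicator {0..1} v \<partial>lborel)"
proof -
  have "(\<integral>\<^sup>+x. ennreal (g (U x)) \<partial>P) = (\<integral>\<^sup>+v. ennreal (indicator {0..1} v) * ennreal (g v) \<partial>lborel)"
    by (rule distributed_nn_integral[OF U_distributed, symmetric]) measurable
  also have "\<dots> = (\<integral>\<^sup>+v. ennreal (g v) * indicator {0..1} v \<partial>lborel)"
    by (intro nn_integral_cong) (auto simp: indicator_def)
  finally show ?thesis .
qed

lemma exp_moment:
  "(\<integral>\<^sup>+x. ennreal ((-2 * ln (U x)) ^ i) \<partial>P) = ennreal (fact i * 2 ^ i)"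
proof -
  have "(\<integral>\<^sup>+x. ennreal ((-2 * ln (U x)) ^ i) \<partial>P) = (\<integral>\<^sup>+y. ennreal (exponential_density (1/2) y) * ennreal (y ^ i) \<partial>lborel)"
    by (rule distributed_nn_integral[OF U_exp, symmetric]) measurable
  also have "\<dots> = (\<integral>\<^sup>+y. ennreal (erlang_density 0 (1/2) y * y ^ i) \<partial>lborel)"
  proof (intro nn_integral_cong)
    fix y :: real
    show "ennreal (exponential_density (1/2) y) * ennreal (y ^ i) = ennreal (erlang_density 0 (1/2) y * y ^ i)"
    proof (cases "y < 0")
      case True
      then have z: "erlang_density 0 (1/2) y = 0" unfolding erlang_density_def by simp
      show ?thesis unfolding z by simp
    next
      case False
      then have "0 \<le> y ^ i" by simp
      moreover have "0 \<le> erlang_density 0 (1/2) y" by simp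
      ultimately show ?thesis using ennreal_mult by metis
    qed
  qed
  also have "\<dots> = ennreal (fact (0 + i) / (fact 0 * (1/2) ^ i))"
    using nn_integral_erlang_ith_moment[of "1/2" 0 i] by (simp only: ennreal_of_nat_eq_real_of_nat)
  also have "fact (0 + i) / (fact 0 * (1/2::real) ^ i) = fact i * 2 ^ i"
    by (simp add: power_one_over)
  finally show ?thesis .
qed

lemma U_pos_AE: "AE x in P. 0 < U x"
proof -
  have "{x\<in>space P. \<not> 0 < U x} = {x\<in>space P. U x \<le> 0}" by auto
  moreover have "prob {x\<in>space P. U x \<le> 0} = 0" using U_le[of 0] by simp
  ultimately show ?thesis
    by (intro AE_I[where N="{x\<in>space P. U x \<le> 0}"]) (auto simp: emeasure_eq_measure)
qed


lemma E_Zf: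
  assumes e: "0 < e" "e < 1" and n: "0 < n" and c: "0 \<le> c"
  shows "(\<integral>\<^sup>+x. ennreal (Zf n c e (U x)) \<partial>P) \<le>
     ennreal ((2 - 2 * e + 2 * e * ln e) + (4 * c / sqrt n) * 3 + (4 * (c^2 + c + 2) / n) * (ln (1 + e) - ln e))"
proof -
  define k1 where "k1 = 4 * c / sqrt n"
  define k2 where "k2 = 4 * (c^2 + c + 2) / n"
  have k: "0 \<le> k1" "0 \<le> k2" using c n by (auto simp: k1_def k2_def)
  have "(\<integral>\<^sup>+x. ennreal (Zf n c e (U x)) \<partial>P) = (\<integral>\<^sup>+v. ennreal (Zf n c e v) * indicator {0..1} v \<partial>lborel)"
    by (rule nn_U) measurable
  also have "\<dots> \<le> (\<integral>\<^sup>+v. ennreal (- 2 * ln (min (v + e) 1)) * indicator {0..1} v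
        + ennreal k1 * (ennreal (1 / sqrt (v + e)) * indicator {0..1} v)
        + ennreal k2 * (ennreal (1 / (v + e)) * indicator {0..1} v) \<partial>lborel)"
  proof (intro nn_integral_mono)
    fix v :: real
    show "ennreal (Zf n c e v) * indicator {0..1} v \<le> ennreal (- 2 * ln (min (v + e) 1)) * indicator {0..1} v
        + ennreal k1 * (ennreal (1 / sqrt (v + e)) * indicator {0..1} v)
        + ennreal k2 * (ennreal (1 / (v + e)) * indicator {0..1} v)"
    proof (cases "v \<in> {0..1}")
      case False then show ?thesis by simp
    next
      case True
      then have v: "0 \<le> v" "v \<le> 1" by auto
      have ve: "0 < v + e" using v e by simp
      have A0: "0 \<le> - 2 * ln (min (v + e) 1)" using ve by simp
      have "Zf n c e v \<le> - 2 * ln (min (v + e) 1) + (k1 * (1 / sqrt (v + e)) + k2 * (1 / (v + e)))"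
        unfolding Zf_def k1_def k2_def using bet_split[of v e n c] v e n c by simp
      then have "ennreal (Zf n c e v) \<le> ennreal (- 2 * ln (min (v + e) 1) + (k1 * (1 / sqrt (v + e)) + k2 * (1 / (v + e))))"
        by (rule ennreal_leI)
      also have "\<dots> = ennreal (- 2 * ln (min (v + e) 1)) + ennreal k1 * ennreal (1 / sqrt (v + e)) + ennreal k2 * ennreal (1 / (v + e))"
      proof -
        have s1: "0 \<le> 1 / sqrt (v + e)" and s2: "0 \<le> 1 / (v + e)" using ve by auto
        have t1: "0 \<le> k1 * (1 / sqrt (v + e))" using k s1 by simp
        have t2: "0 \<le> k2 * (1 / (v + e))" using k s2 by simp
        show ?thesis
          by (simp only: ennreal_plus[OF A0 add_nonneg_nonneg[OF t1 t2]] ennreal_plus[OF t1 t2]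
              ennreal_mult[OF k(1) s1] ennreal_mult[OF k(2) s2] add.assoc)
      qed
      finally show ?thesis using True by simp
    qed
  qed
  also have "\<dots> = (\<integral>\<^sup>+v. ennreal (- 2 * ln (min (v + e) 1)) * indicator {0..1} v \<partial>lborel)
        + ennreal k1 * (\<integral>\<^sup>+v. ennreal (1 / sqrt (v + e)) * indicator {0..1} v \<partial>lborel)
        + ennreal k2 * (\<integral>\<^sup>+v. ennreal (1 / (v + e)) * indicator {0..1} v \<partial>lborel)"
    by (simp add: nn_integral_add nn_integral_cmult)
  also have "\<dots> \<le> ennreal (2 - 2 * e + 2 * e * ln e) + ennreal k1 * ennreal 3 + ennreal k2 * ennreal (ln (1 + e) - ln e)"
    using integral_A[OF e] integral_B[OF e] integral_C[OF e] by (intro add_mono mult_left_mono) auto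
  also have "\<dots> = ennreal ((2 - 2 * e + 2 * e * ln e) + k1 * 3 + k2 * (ln (1 + e) - ln e))"
  proof -
    have a: "0 \<le> 2 - 2 * e + 2 * e * ln e" using EA_nonneg e by simp
    have b: "0 \<le> ln (1 + e) - ln e" using e by simp
    show ?thesis using a b k by (simp add: ennreal_plus ennreal_mult)
  qed
  finally show ?thesis by (simp add: k1_def k2_def)
qed

lemma E_Zf2:
  assumes e: "0 < e" "e < 1" and n: "0 < n" and c: "0 \<le> c" and ce: "(3 * c^2 + 2 * c + 4) / n \<le> e"
  shows "(\<integral>\<^sup>+x. ennreal ((Zf n c e (U x))^2) \<partial>P) \<le> ennreal 24"
proof -
  have "(\<integral>\<^sup>+x. ennreal ((Zf n c e (U x))^2) \<partial>P) \<le> (\<integral>\<^sup>+x. ennreal 2 * ennreal ((-2 * ln (U x)) ^ 2) + ennreal 8 \<partial>P)"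
  proof (rule nn_integral_mono_AE)
    show "AE x in P. ennreal ((Zf n c e (U x))^2) \<le> ennreal 2 * ennreal ((-2 * ln (U x)) ^ 2) + ennreal 8"
      using U_pos_AE
    proof (rule AE_mp, intro AE_I2 impI)
      fix x assume u: "0 < U x"
      have v: "0 \<le> U x" "U x \<le> 1" using U_bounds[of x] by auto
      note p = Zf_parts[OF v e n c ce]
      define a where "a = - 2 * ln (min (U x + e) 1)"
      define d where "d = 4 * bet n c (U x) / (U x + e)"
      have z: "Zf n c e (U x) = a + d" by (simp add: Zf_def a_def d_def)
      have a: "0 \<le> a" "a \<le> - 2 * ln (U x)" using p(1) p(5)[OF u] by (auto simp: a_def)
      have d: "0 \<le> d" "d \<le> 2" using p(3,4) by (auto simp: d_def)
      have "(a + d)^2 \<le> 2 * a^2 + 2 * d^2"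
      proof -
        have "0 \<le> (a - d)^2" by simp
        then show ?thesis by (simp add: power2_eq_square algebra_simps)
      qed
      also have "\<dots> \<le> 2 * (-2 * ln (U x))^2 + 2 * 2^2"
        using a d by (intro add_mono mult_left_mono power_mono) auto
      finally have "(Zf n c e (U x))^2 \<le> 2 * (-2 * ln (U x))^2 + 8" unfolding z by simp
      then have "ennreal ((Zf n c e (U x))^2) \<le> ennreal (2 * (-2 * ln (U x))^2 + 8)" by (rule ennreal_leI)
      also have "\<dots> = ennreal 2 * ennreal ((-2 * ln (U x)) ^ 2) + ennreal 8"
        by (simp add: ennreal_plus ennreal_mult)
      finally show "ennreal ((Zf n c e (U x))^2) \<le> ennreal 2 * ennreal ((-2 * ln (U x)) ^ 2) + ennreal 8" .
    qed
  qed
  also have "\<dots> = ennreal 2 * (\<integral>\<^sup>+x. ennreal ((-2 * ln (U x)) ^ 2) \<partial>P) + ennreal 8"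
    by (simp add: nn_integral_add nn_integral_cmult emeasure_space_1)
  also have "\<dots> = ennreal 24" using exp_moment[of 2] by (simp add: ennreal_mult[symmetric] ennreal_plus[symmetric] del: ennreal_plus)
  finally show ?thesis .
qed

end

definition epsn :: "nat \<Rightarrow> real \<Rightarrow> real" where
  "epsn n \<delta> = sqrt (ln (2 / \<delta>) / (2 * real n))"

lemma h_dkwm_eps: "h_dkwm n \<delta> u = min (u + epsn n \<delta>) 1"
  by (simp add: h_dkwm_def epsn_def)

context setting
begin

lemma u_marg_Kc: "u_marg n s \<omega> x = (1 + Kc n \<omega> x) / (real n + 1)"
  by (simp add: u_marg_def Kc_def)

lemma term_bounds:
  assumes n: "0 < n" "n \<le> N" and c: "0 \<le> c" and e: "0 < epsn n \<delta>" "epsn n \<delta> < 1"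
    and ce: "(3 * c^2 + 2 * c + 4) / n \<le> epsn n \<delta>"
    and \<omega>: "\<omega> \<in> space (Om N) - Bad n N c"
  shows "- 2 * ln (h_dkwm n \<delta> (u_marg n s \<omega> x)) \<le> Zf n c (epsn n \<delta>) (U x)"
    and "0 < U x \<Longrightarrow> \<bar>- 2 * ln (h_dkwm n \<delta> (u_marg n s \<omega> x)) - (- 2 * ln (U x))\<bar> \<le> rhof n c (epsn n \<delta>) (U x)"
proof -
  define e where "e = epsn n \<delta>"
  define v where "v = U x"
  define u where "u = u_marg n s \<omega> x"
  have v: "0 \<le> v" "v \<le> 1" using U_bounds by (auto simp: v_def)
  have K: "\<bar>Kc n \<omega> x - n * v\<bar> \<le> c * sqrt (n * v) + c^2 + c + 1"
    unfolding v_def by (rule good_count[OF n c \<omega>])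
  have uv: "\<bar>u - v\<bar> \<le> bet n c v"
    unfolding u_def u_marg_Kc bet_def using u_close[OF n(1) v(1) K v(2)] by (simp add: add.commute)
  have bs: "bet n c v \<le> (v + e) / 2"
    unfolding bet_def e_def by (rule beta_small) (use v n c ce in auto)
  have lc: "\<bar>ln (min (u + e) 1) - ln (min (v + e) 1)\<bar> \<le> 2 * bet n c v / (v + e)"
    by (rule log_close[OF v _ _ uv bs]) (use e in \<open>auto simp: e_def\<close>)
  have h: "h_dkwm n \<delta> (u_marg n s \<omega> x) = min (u + e) 1" by (simp add: h_dkwm_eps u_def e_def)
  have "- 2 * ln (min (u + e) 1) \<le> - 2 * ln (min (v + e) 1) + 4 * bet n c v / (v + e)"
    using lc by (simp add: abs_le_iff)
  then show "- 2 * ln (h_dkwm n \<delta> (u_marg n s \<omega> x)) \<le> Zf n c (epsn n \<delta>) (U x)"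
    unfolding h Zf_def e_def[symmetric] v_def[symmetric] .
  assume vp: "0 < U x"
  then have vp': "0 < v" by (simp add: v_def)
  have "ln v \<le> ln (min (v + e) 1)" using vp' v e by (simp add: e_def)
  then have "\<bar>- 2 * ln (min (u + e) 1) - (- 2 * ln v)\<bar> \<le> 2 * (ln (min (v + e) 1) - ln v) + 4 * bet n c v / (v + e)"
    using lc by (simp add: abs_le_iff)
  then show "\<bar>- 2 * ln (h_dkwm n \<delta> (u_marg n s \<omega> x)) - (- 2 * ln (U x))\<bar> \<le> rhof n c (epsn n \<delta>) (U x)"
    unfolding h rhof_def e_def[symmetric] v_def[symmetric] using vp' by simp
qed

lemma stat_bounds:
  assumes n: "0 < n" and N: "N = n + m" and c: "0 \<le> c" and e: "0 < epsn n \<delta>" "epsn n \<delta> < 1"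
    and ce: "(3 * c^2 + 2 * c + 4) / n \<le> epsn n \<delta>"
    and \<omega>: "\<omega> \<in> space (Om N) - Bad n N c"
  shows "fisher_stat n m \<delta> s \<omega> \<le> (\<Sum>i<m. Zf n c (epsn n \<delta>) (U (\<omega> (n + i))))"
    and "(\<forall>i<m. 0 < U (\<omega> (n + i))) \<Longrightarrow>
         \<bar>fisher_stat n m \<delta> s \<omega> - (\<Sum>i<m. - 2 * ln (U (\<omega> (n + i))))\<bar> \<le> (\<Sum>i<m. rhof n c (epsn n \<delta>) (U (\<omega> (n + i))))"
proof -
  have nN: "n \<le> N" using N by simp
  note tb = term_bounds[OF n nN c e ce \<omega>]
  show "fisher_stat n m \<delta> s \<omega> \<le> (\<Sum>i<m. Zf n c (epsn n \<delta>) (U (\<omega> (n + i))))"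
    unfolding fisher_stat_def by (intro sum_mono) (rule tb(1))
  assume pos: "\<forall>i<m. 0 < U (\<omega> (n + i))"
  have "\<bar>fisher_stat n m \<delta> s \<omega> - (\<Sum>i<m. - 2 * ln (U (\<omega> (n + i))))\<bar>
        = \<bar>\<Sum>i<m. (- 2 * ln (h_dkwm n \<delta> (u_marg n s \<omega> (\<omega> (n + i)))) - (- 2 * ln (U (\<omega> (n + i)))))\<bar>"
    unfolding fisher_stat_def by (simp only: sum_subtractf)
  also have "\<dots> \<le> (\<Sum>i<m. \<bar>- 2 * ln (h_dkwm n \<delta> (u_marg n s \<omega> (\<omega> (n + i)))) - (- 2 * ln (U (\<omega> (n + i))))\<bar>)"
    by (rule sum_abs)
  also have "\<dots> \<le> (\<Sum>i<m. rhof n c (epsn n \<delta>) (U (\<omega> (n + i))))"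
    using pos by (intro sum_mono tb(2)) auto
  finally show "\<bar>fisher_stat n m \<delta> s \<omega> - (\<Sum>i<m. - 2 * ln (U (\<omega> (n + i))))\<bar> \<le> (\<Sum>i<m. rhof n c (epsn n \<delta>) (U (\<omega> (n + i))))" .
qed

end

context setting
begin

lemma E_D:
  assumes e: "0 < e" "e < 1" and n: "0 < n" and c: "0 \<le> c"
  shows "(\<integral>\<^sup>+x. ennreal (4 * bet n c (U x) / (U x + e)) \<partial>P) \<le>
     ennreal ((4 * c / sqrt n) * 3 + (4 * (c^2 + c + 2) / n) * (ln (1 + e) - ln e))"
proof -
  define k1 where "k1 = 4 * c / sqrt n"
  define k2 where "k2 = 4 * (c^2 + c + 2) / n"
  have k: "0 \<le> k1" "0 \<le> k2" using c n by (auto simp: k1_def k2_def)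
  have "(\<integral>\<^sup>+x. ennreal (4 * bet n c (U x) / (U x + e)) \<partial>P) = (\<integral>\<^sup>+v. ennreal (4 * bet n c v / (v + e)) * indicator {0..1} v \<partial>lborel)"
    by (rule nn_U) measurable
  also have "\<dots> \<le> (\<integral>\<^sup>+v. ennreal k1 * (ennreal (1 / sqrt (v + e)) * indicator {0..1} v)
        + ennreal k2 * (ennreal (1 / (v + e)) * indicator {0..1} v) \<partial>lborel)"
  proof (intro nn_integral_mono)
    fix v :: real
    show "ennreal (4 * bet n c v / (v + e)) * indicator {0..1} v \<le> ennreal k1 * (ennreal (1 / sqrt (v + e)) * indicator {0..1} v)
        + ennreal k2 * (ennreal (1 / (v + e)) * indicator {0..1} v)"
    proof (cases "v \<in> {0..1}")
      case False then show ?thesis by simp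
    next
      case True
      then have v: "0 \<le> v" "v \<le> 1" by auto
      have ve: "0 < v + e" using v e by simp
      have "4 * bet n c v / (v + e) \<le> k1 * (1 / sqrt (v + e)) + k2 * (1 / (v + e))"
        unfolding k1_def k2_def using bet_split[of v e n c] v e n c by simp
      then have "ennreal (4 * bet n c v / (v + e)) \<le> ennreal (k1 * (1 / sqrt (v + e)) + k2 * (1 / (v + e)))"
        by (rule ennreal_leI)
      also have "\<dots> = ennreal k1 * ennreal (1 / sqrt (v + e)) + ennreal k2 * ennreal (1 / (v + e))"
      proof -
        have s1: "0 \<le> 1 / sqrt (v + e)" and s2: "0 \<le> 1 / (v + e)" using ve by auto
        have t1: "0 \<le> k1 * (1 / sqrt (v + e))" using k s1 by simp
        have t2: "0 \<le> k2 * (1 / (v + e))" using k s2 by simp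
        show ?thesis
          by (simp only: ennreal_plus[OF t1 t2] ennreal_mult[OF k(1) s1] ennreal_mult[OF k(2) s2])
      qed
      finally show ?thesis using True by simp
    qed
  qed
  also have "\<dots> = ennreal k1 * (\<integral>\<^sup>+v. ennreal (1 / sqrt (v + e)) * indicator {0..1} v \<partial>lborel)
        + ennreal k2 * (\<integral>\<^sup>+v. ennreal (1 / (v + e)) * indicator {0..1} v \<partial>lborel)"
    by (simp add: nn_integral_add nn_integral_cmult)
  also have "\<dots> \<le> ennreal k1 * ennreal 3 + ennreal k2 * ennreal (ln (1 + e) - ln e)"
    using integral_B[OF e] integral_C[OF e] by (intro add_mono mult_left_mono) auto
  also have "\<dots> = ennreal (k1 * 3 + k2 * (ln (1 + e) - ln e))"
  proof -
    have b: "0 \<le> ln (1 + e) - ln e" using e by simp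
    show ?thesis using b k by (simp add: ennreal_plus ennreal_mult)
  qed
  finally show ?thesis by (simp add: k1_def k2_def)
qed

lemma E_A:
  assumes e: "0 < e" "e < 1"
  shows "(\<integral>\<^sup>+x. ennreal (- 2 * ln (min (U x + e) 1)) \<partial>P) = ennreal (2 - 2 * e + 2 * e * ln e)"
proof -
  have "(\<integral>\<^sup>+x. ennreal (- 2 * ln (min (U x + e) 1)) \<partial>P) = (\<integral>\<^sup>+v. ennreal (- 2 * ln (min (v + e) 1)) * indicator {0..1} v \<partial>lborel)"
    by (rule nn_U[where g="\<lambda>v. - 2 * ln (min (v + e) 1)"]) measurable
  also have "\<dots> = ennreal (2 - 2 * e + 2 * e * ln e)" by (rule integral_A[OF e])
  finally show ?thesis .
qed

lemma E_rho:
  assumes e: "0 < e" "e < 1" and n: "0 < n" and c: "0 \<le> c"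
  shows "(\<integral>\<^sup>+x. ennreal (rhof n c e (U x)) \<partial>P) \<le>
     ennreal ((2 * e - 2 * e * ln e) + (4 * c / sqrt n) * 3 + (4 * (c^2 + c + 2) / n) * (ln (1 + e) - ln e))"
proof -
  define A where "A x = - 2 * ln (min (U x + e) 1)" for x
  define L where "L x = - 2 * ln (U x)" for x
  define D where "D x = 4 * bet n c (U x) / (U x + e)" for x
  have [measurable]: "A \<in> borel_measurable P" "L \<in> borel_measurable P" "D \<in> borel_measurable P"
    unfolding A_def[abs_def] L_def[abs_def] D_def[abs_def] by measurable
  have AE1: "AE x in P. 0 \<le> A x \<and> A x \<le> L x \<and> 0 \<le> D x \<and> rhof n c e (U x) = (L x - A x) + D x"
    using U_pos_AE
  proof (rule AE_mp, intro AE_I2 impI)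
    fix x assume u: "0 < U x"
    have v: "0 \<le> U x" "U x \<le> 1" using U_bounds[of x] by auto
    have ve: "0 < U x + e" using v e by simp
    have "0 \<le> A x" using ve by (simp add: A_def)
    moreover have "A x \<le> L x"
    proof -
      have "ln (U x) \<le> ln (min (U x + e) 1)" using u v e by simp
      then show ?thesis by (simp add: A_def L_def)
    qed
    moreover have "0 \<le> D x" unfolding D_def bet_def using v ve n c by simp
    moreover have "rhof n c e (U x) = (L x - A x) + D x"
      using u by (simp add: rhof_def A_def L_def D_def)
    ultimately show "0 \<le> A x \<and> A x \<le> L x \<and> 0 \<le> D x \<and> rhof n c e (U x) = (L x - A x) + D x" by blast
  qed
  have LA: "(\<integral>\<^sup>+x. ennreal (L x - A x) \<partial>P) = ennreal (2 * e - 2 * e * ln e)"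
  proof -
    have "(\<integral>\<^sup>+x. ennreal (L x) \<partial>P) = (\<integral>\<^sup>+x. ennreal (A x) + ennreal (L x - A x) \<partial>P)"
      by (intro nn_integral_cong_AE) (rule eventually_mono[OF AE1], auto simp: ennreal_plus[symmetric] simp del: ennreal_plus)
    also have "\<dots> = (\<integral>\<^sup>+x. ennreal (A x) \<partial>P) + (\<integral>\<^sup>+x. ennreal (L x - A x) \<partial>P)"
      by (rule nn_integral_add) auto
    finally have eq: "(\<integral>\<^sup>+x. ennreal (L x) \<partial>P) = (\<integral>\<^sup>+x. ennreal (A x) \<partial>P) + (\<integral>\<^sup>+x. ennreal (L x - A x) \<partial>P)" .
    have L2: "(\<integral>\<^sup>+x. ennreal (L x) \<partial>P) = ennreal 2"
      using exp_moment[of 1] by (simp add: L_def)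
    have A2: "(\<integral>\<^sup>+x. ennreal (A x) \<partial>P) = ennreal (2 - 2 * e + 2 * e * ln e)"
      using E_A[OF e] by (simp add: A_def)
    have nn: "0 \<le> 2 - 2 * e + 2 * e * ln e" by (rule EA_nonneg[OF e(1)])
    have "ennreal 2 = ennreal (2 - 2 * e + 2 * e * ln e) + (\<integral>\<^sup>+x. ennreal (L x - A x) \<partial>P)"
      using eq L2 A2 by simp
    moreover have "(\<integral>\<^sup>+x. ennreal (L x - A x) \<partial>P) = (ennreal (2 - 2 * e + 2 * e * ln e) + (\<integral>\<^sup>+x. ennreal (L x - A x) \<partial>P)) - ennreal (2 - 2 * e + 2 * e * ln e)"
      by (rule ennreal_add_diff_cancel_left[symmetric]) simp
    ultimately have "(\<integral>\<^sup>+x. ennreal (L x - A x) \<partial>P) = ennreal 2 - ennreal (2 - 2 * e + 2 * e * ln e)"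
      by simp
    also have "\<dots> = ennreal (2 * e - 2 * e * ln e)" using ennreal_minus[OF nn, of 2] by simp
    finally show ?thesis .
  qed
  have "(\<integral>\<^sup>+x. ennreal (rhof n c e (U x)) \<partial>P) = (\<integral>\<^sup>+x. ennreal (L x - A x) + ennreal (D x) \<partial>P)"
    by (intro nn_integral_cong_AE) (rule eventually_mono[OF AE1], auto simp: ennreal_plus[symmetric] simp del: ennreal_plus)
  also have "\<dots> = (\<integral>\<^sup>+x. ennreal (L x - A x) \<partial>P) + (\<integral>\<^sup>+x. ennreal (D x) \<partial>P)"
    by (rule nn_integral_add) auto
  also have "\<dots> \<le> ennreal (2 * e - 2 * e * ln e) + ennreal ((4 * c / sqrt n) * 3 + (4 * (c^2 + c + 2) / n) * (ln (1 + e) - ln e))"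
    unfolding LA D_def using E_D[OF e n c] by (intro add_mono) auto
  also have "\<dots> = ennreal ((2 * e - 2 * e * ln e) + ((4 * c / sqrt n) * 3 + (4 * (c^2 + c + 2) / n) * (ln (1 + e) - ln e)))"
  proof (rule ennreal_plus[symmetric])
    have "e * ln e \<le> 0" using e by (simp add: mult_nonneg_nonpos)
    then show "0 \<le> 2 * e - 2 * e * ln e" using e by linarith
    have "0 \<le> ln (1 + e) - ln e" using e by simp
    then show "0 \<le> (4 * c / sqrt n) * 3 + (4 * (c^2 + c + 2) / n) * (ln (1 + e) - ln e)" using c n by simp
  qed
  finally show ?thesis by (simp add: add.assoc)
qed


lemma Kc_sum: "Kc n \<omega> x = (\<Sum>j<n. if s (\<omega> j) \<le> s x then 1 else 0)"
proof -
  have "(\<Sum>j<n. if s (\<omega> j) \<le> s x then 1 else 0) = (\<Sum>j\<in>{j. j < n \<and> s (\<omega> j) \<le> s x}. (1::real))"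
    by (rule sum.mono_neutral_cong_right) auto
  then show ?thesis by (simp add: Kc_def)
qed

lemma meas_sum_shift[measurable]:
  fixes g :: "'a \<Rightarrow> real"
  assumes "n + m \<le> N" and [measurable]: "g \<in> borel_measurable P"
  shows "(\<lambda>\<omega>. \<Sum>i<m. g (\<omega> (n + i))) \<in> borel_measurable (Om N)"
proof (rule borel_measurable_sum)
  fix i assume "i \<in> {..<m}"
  then have [simp]: "n + i < N" using assms by auto
  show "(\<lambda>\<omega>. g (\<omega> (n + i))) \<in> borel_measurable (Om N)" by measurable
qed

lemma fisher_meas[measurable]:
  assumes "n + m \<le> N"
  shows "(\<lambda>\<omega>. fisher_stat n m \<delta> s \<omega>) \<in> borel_measurable (Om N)"
  unfolding fisher_stat_def
proof (rule borel_measurable_sum)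
  fix i assume "i \<in> {..<m}"
  then have ni[simp]: "n + i < N" using assms by auto
  have K[measurable]: "(\<lambda>\<omega>. Kc n \<omega> (\<omega> (n + i))) \<in> borel_measurable (Om N)"
    unfolding Kc_sum
  proof (rule borel_measurable_sum)
    fix j assume "j \<in> {..<n}"
    then have [simp]: "j < N" using assms by auto
    show "(\<lambda>\<omega>. if s (\<omega> j) \<le> s (\<omega> (n + i)) then 1 else 0 :: real) \<in> borel_measurable (Om N)" by measurable
  qed
  show "(\<lambda>\<omega>. - 2 * ln (h_dkwm n \<delta> (u_marg n s \<omega> (\<omega> (n + i))))) \<in> borel_measurable (Om N)"
    unfolding u_marg_Kc h_dkwm_def by measurable
qed

lemma mgf_Zf:
  assumes n: "0 < n" and c: "0 \<le> c" and e: "0 < e" "e < 1"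
    and ce: "(3 * c^2 + 2 * c + 4) / n \<le> e" and l: "0 \<le> l" and lB: "l * (- 2 * ln e + 2) \<le> 1"
  shows "(\<integral>\<^sup>+x. ennreal (exp (l * Zf n c e (U x))) \<partial>P) \<le>
    ennreal (1 + l * ((2 - 2 * e + 2 * e * ln e) + (4 * c / sqrt n) * 3 + (4 * (c^2 + c + 2) / n) * (ln (1 + e) - ln e)) + 24 * l^2)"
proof -
  define EZ where "EZ = (2 - 2 * e + 2 * e * ln e) + (4 * c / sqrt n) * 3 + (4 * (c^2 + c + 2) / n) * (ln (1 + e) - ln e)"
  define Y where "Y x = Zf n c e (U x)" for x
  have Ym[measurable]: "Y \<in> borel_measurable P" unfolding Y_def[abs_def] by measurable
  have EZ0: "0 \<le> EZ"
  proof -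
    have "0 \<le> 2 - 2 * e + 2 * e * ln e" using EA_nonneg e by simp
    moreover have "0 \<le> ln (1 + e) - ln e" using e by simp
    ultimately show ?thesis unfolding EZ_def using c n by simp
  qed
  have "(\<integral>\<^sup>+x. ennreal (exp (l * Y x)) \<partial>P) \<le> (\<integral>\<^sup>+x. 1 + ennreal l * ennreal (Y x) + ennreal (l^2) * ennreal ((Y x)^2) \<partial>P)"
  proof (intro nn_integral_mono)
    fix x assume "x \<in> space P"
    have v: "0 \<le> U x" "U x \<le> 1" using U_bounds[of x] by auto
    note p = Zf_parts[OF v e n c ce]
    have Y0: "0 \<le> Y x" and YB: "Y x \<le> - 2 * ln e + 2" using p(1-4) by (auto simp: Y_def Zf_def)
    have "l * Y x \<le> l * (- 2 * ln e + 2)" using YB l by (rule mult_left_mono)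
    then have "l * Y x \<le> 1" using lB by linarith
    then have "exp (l * Y x) \<le> 1 + l * Y x + (l * Y x)^2" by (rule exp_le_quad)
    then have "ennreal (exp (l * Y x)) \<le> ennreal (1 + l * Y x + l^2 * (Y x)^2)"
      by (intro ennreal_leI) (simp add: power_mult_distrib)
    also have "\<dots> = 1 + ennreal l * ennreal (Y x) + ennreal (l^2) * ennreal ((Y x)^2)"
      using l Y0 by (simp add: ennreal_plus ennreal_mult)
    finally show "ennreal (exp (l * Y x)) \<le> 1 + ennreal l * ennreal (Y x) + ennreal (l^2) * ennreal ((Y x)^2)" .
  qed
  also have "\<dots> = 1 + ennreal l * (\<integral>\<^sup>+x. ennreal (Y x) \<partial>P) + ennreal (l^2) * (\<integral>\<^sup>+x. ennreal ((Y x)^2) \<partial>P)"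
    by (simp add: nn_integral_add nn_integral_cmult emeasure_space_1)
  also have "\<dots> \<le> 1 + ennreal l * ennreal EZ + ennreal (l^2) * ennreal 24"
    using E_Zf[OF e n c] E_Zf2[OF e n c ce] unfolding Y_def EZ_def
    by (intro add_mono mult_left_mono) auto
  also have "\<dots> = ennreal (1 + l * EZ + 24 * l^2)"
    using l EZ0 by (simp add: ennreal_plus ennreal_mult mult.commute)
  finally show ?thesis by (simp add: Y_def EZ_def)
qed

lemma prob_a:
  assumes n: "0 < n" and N: "N = n + m" and c: "0 \<le> c" and e: "0 < epsn n \<delta>" "epsn n \<delta> < 1"
    and ce: "(3 * c^2 + 2 * c + 4) / n \<le> epsn n \<delta>" and l: "0 \<le> l" and lB: "l * (- 2 * ln (epsn n \<delta>) + 2) \<le> 1"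
  shows "measure (Om N) {\<omega>\<in>space (Om N). t \<le> fisher_stat n m \<delta> s \<omega>} \<le> 2 * (real n + 1) * exp (- (c^2 / 4)) +
    exp (- l * t) * (1 + l * ((2 - 2 * epsn n \<delta> + 2 * epsn n \<delta> * ln (epsn n \<delta>)) + (4 * c / sqrt n) * 3
       + (4 * (c^2 + c + 2) / n) * (ln (1 + epsn n \<delta>) - ln (epsn n \<delta>))) + 24 * l^2) ^ m"
proof -
  interpret O: prob_space "Om N" by (rule prob_Om)
  define e where "e = epsn n \<delta>"
  define CC where "CC = 1 + l * ((2 - 2 * e + 2 * e * ln e) + (4 * c / sqrt n) * 3 + (4 * (c^2 + c + 2) / n) * (ln (1 + e) - ln e)) + 24 * l^2"
  define J where "J = (\<lambda>i. n + i) ` {..<m}"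
  have J: "J \<subseteq> {..<N}" "card J = m" using N by (auto simp: J_def card_image)
  define Y where "Y x = Zf n c e (U x)" for x
  have Ym[measurable]: "Y \<in> borel_measurable P" unfolding Y_def[abs_def] by measurable
  have sumJ: "(\<Sum>j\<in>J. Y (\<omega> j)) = (\<Sum>i<m. Zf n c e (U (\<omega> (n + i))))" for \<omega>
    unfolding J_def Y_def by (subst sum.reindex) (auto simp: inj_on_def)
  have mgf: "(\<integral>\<^sup>+x. ennreal (exp (l * Y x)) \<partial>P) \<le> ennreal CC"
    unfolding Y_def CC_def by (rule mgf_Zf[OF n c e[unfolded e_def[symmetric]] ce[unfolded e_def[symmetric]] l lB[unfolded e_def[symmetric]]])
  have CC0: "0 \<le> CC"
  proof -
    have "0 \<le> 2 - 2 * e + 2 * e * ln e" using EA_nonneg e by (simp add: e_def)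
    moreover have "0 \<le> ln (1 + e) - ln e" using e by (simp add: e_def)
    ultimately show ?thesis unfolding CC_def using c n l by simp
  qed
  have nN: "n \<le> N" using N by simp
  have Bm: "Bad n N c \<in> sets (Om N)" by (rule Bad_meas[OF nN])
  define B where "B = {\<omega>\<in>space (Om N). t \<le> (\<Sum>j\<in>J. Y (\<omega> j))}"
  have Bm2: "B \<in> sets (Om N)"
  proof -
    have eqf: "(\<lambda>\<omega>. \<Sum>j\<in>J. Y (\<omega> j)) = (\<lambda>\<omega>. \<Sum>i<m. Zf n c e (U (\<omega> (n + i))))"
      using sumJ by auto
    have "(\<lambda>\<omega>. \<Sum>i<m. Zf n c e (U (\<omega> (n + i)))) \<in> borel_measurable (Om N)"
      by (rule meas_sum_shift) (use N in auto)
    then have "(\<lambda>\<omega>. \<Sum>j\<in>J. Y (\<omega> j)) \<in> borel_measurable (Om N)" unfolding eqf .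
    then show ?thesis unfolding B_def by measurable
  qed
  have sub: "{\<omega>\<in>space (Om N). t \<le> fisher_stat n m \<delta> s \<omega>} \<subseteq> Bad n N c \<union> B"
  proof
    fix \<omega> assume w: "\<omega> \<in> {\<omega>\<in>space (Om N). t \<le> fisher_stat n m \<delta> s \<omega>}"
    show "\<omega> \<in> Bad n N c \<union> B"
    proof (cases "\<omega> \<in> Bad n N c")
      case False
      then have "\<omega> \<in> space (Om N) - Bad n N c" using w by auto
      then have "fisher_stat n m \<delta> s \<omega> \<le> (\<Sum>i<m. Zf n c (epsn n \<delta>) (U (\<omega> (n + i))))"
        by (rule stat_bounds(1)[OF n N c e ce])
      then show ?thesis using w unfolding B_def sumJ e_def by auto
    qed simp
  qed
  have "measure (Om N) {\<omega>\<in>space (Om N). t \<le> fisher_stat n m \<delta> s \<omega>} \<le> measure (Om N) (Bad n N c \<union> B)"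
    using sub Bm Bm2 by (intro O.finite_measure_mono) auto
  also have "\<dots> \<le> measure (Om N) (Bad n N c) + measure (Om N) B"
    using Bm Bm2 by (rule measure_Un_le)
  also have "\<dots> \<le> 2 * (real n + 1) * exp (- (c^2 / 4)) + exp (- l * t) * CC ^ card J"
    unfolding B_def by (intro add_mono Bad_prob[OF n nN c] markov_prod[OF J(1) Ym l mgf CC0])
  finally show ?thesis using J(2) by (simp add: CC_def e_def)
qed

end

context setting
begin

lemma T0_measure:
  assumes m: "m = Suc k" and N: "N = n + m" and A: "A \<in> sets borel"
  shows "measure (Om N) {\<omega>\<in>space (Om N). (\<Sum>i<m. - 2 * ln (U (\<omega> (n + i)))) \<in> A} = measure (chiM k) A"
proof -
  have D: "distributed (Om N) lborel (\<lambda>\<omega>. \<Sum>i<m. -2 * ln (U (\<omega> (n + i)))) (erlang_density k (1/2))"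
    by (rule T0_erlang[OF m N])
  then have d: "distr (Om N) lborel (\<lambda>\<omega>. \<Sum>i<m. -2 * ln (U (\<omega> (n + i)))) = chiM k"
    by (simp add: distributed_def chiM_def)
  have meas: "(\<lambda>\<omega>. \<Sum>i<m. -2 * ln (U (\<omega> (n + i)))) \<in> measurable (Om N) lborel"
    using D by (simp add: distributed_def)
  have "measure (chiM k) A = measure (distr (Om N) lborel (\<lambda>\<omega>. \<Sum>i<m. -2 * ln (U (\<omega> (n + i))))) A"
    unfolding d ..
  also have "\<dots> = measure (Om N) ((\<lambda>\<omega>. \<Sum>i<m. -2 * ln (U (\<omega> (n + i)))) -` A \<inter> space (Om N))"
    using A meas by (intro measure_distr) auto
  finally show ?thesis by (simp add: vimage_def Int_def conj_commute)
qed

lemma Z0_null: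
  assumes N: "N = n + m"
  shows "measure (Om N) {\<omega>\<in>space (Om N). \<exists>i<m. U (\<omega> (n + i)) \<le> 0} = 0"
proof -
  interpret O: prob_space "Om N" by (rule prob_Om)
  have each: "measure (Om N) {\<omega>\<in>space (Om N). U (\<omega> (n + i)) \<le> 0} = 0" if i: "i < m" for i
  proof -
    have ni: "n + i < N" using i N by simp
    have "measure (Om N) {\<omega>\<in>space (Om N). U (\<omega> (n + i)) \<le> 0} = measure (distr (Om N) P (\<lambda>\<omega>. \<omega> (n + i))) {x\<in>space P. U x \<le> 0}"
      using ni by (subst measure_distr) (auto intro!: arg_cong[where f="measure (Om N)"] simp: space_Om_comp)
    also have "\<dots> = prob {x\<in>space P. U x \<le> 0}" using Om_component[OF ni] by simp
    also have "\<dots> = 0" using U_le[of 0] by simp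
    finally show ?thesis .
  qed
  have "measure (Om N) {\<omega>\<in>space (Om N). \<exists>i<m. U (\<omega> (n + i)) \<le> 0} \<le> (\<Sum>i<m. measure (Om N) {\<omega>\<in>space (Om N). U (\<omega> (n + i)) \<le> 0})"
  proof -
    have eq: "{\<omega>\<in>space (Om N). \<exists>i<m. U (\<omega> (n + i)) \<le> 0} = (\<Union>i<m. {\<omega>\<in>space (Om N). U (\<omega> (n + i)) \<le> 0})" by auto
    show ?thesis unfolding eq
    proof (rule O.finite_measure_subadditive_finite)
      show "(\<lambda>i. {\<omega>\<in>space (Om N). U (\<omega> (n + i)) \<le> 0}) ` {..<m} \<subseteq> O.events"
      proof safe
        fix i assume "i < m"
        then have [simp]: "n + i < N" using N by simp
        show "{\<omega>\<in>space (Om N). U (\<omega> (n + i)) \<le> 0} \<in> O.events" by measurable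
      qed
    qed simp
  qed
  also have "\<dots> = 0" using each by simp
  finally show ?thesis by (simp add: measure_nonneg antisym)
qed

lemma markov_R:
  fixes g :: "real \<Rightarrow> real"
  assumes N: "N = n + m" and g[measurable]: "g \<in> borel_measurable borel" and g0: "\<And>v. 0 \<le> g v"
    and Eg: "(\<integral>\<^sup>+x. ennreal (g (U x)) \<partial>P) \<le> ennreal G" and G0: "0 \<le> G" and r: "0 < r"
  shows "measure (Om N) {\<omega>\<in>space (Om N). r \<le> (\<Sum>i<m. g (U (\<omega> (n + i))))} \<le> m * G / r"
proof -
  interpret O: prob_space "Om N" by (rule prob_Om)
  have fm[measurable]: "(\<lambda>\<omega>. \<Sum>i<m. g (U (\<omega> (n + i)))) \<in> borel_measurable (Om N)"
    by (rule meas_sum_shift) (use N in auto)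
  let ?A = "{\<omega>\<in>space (Om N). r \<le> (\<Sum>i<m. g (U (\<omega> (n + i))))}"
  have "emeasure (Om N) ?A = (\<integral>\<^sup>+\<omega>. indicator ?A \<omega> \<partial>Om N)"
    by (simp add: nn_integral_indicator)
  also have "\<dots> \<le> (\<integral>\<^sup>+\<omega>. ennreal (1 / r) * (\<Sum>i<m. ennreal (g (U (\<omega> (n + i))))) \<partial>Om N)"
  proof (intro nn_integral_mono)
    fix \<omega> assume "\<omega> \<in> space (Om N)"
    have "(\<Sum>i<m. ennreal (g (U (\<omega> (n + i))))) = ennreal (\<Sum>i<m. g (U (\<omega> (n + i))))"
      using g0 by (simp add: sum_ennreal)
    then have eq: "ennreal (1 / r) * (\<Sum>i<m. ennreal (g (U (\<omega> (n + i))))) = ennreal ((\<Sum>i<m. g (U (\<omega> (n + i)))) / r)"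
      using r by (simp add: ennreal_mult[symmetric] sum_nonneg g0)
    show "indicator ?A \<omega> \<le> ennreal (1 / r) * (\<Sum>i<m. ennreal (g (U (\<omega> (n + i)))))"
      unfolding eq using r by (auto simp: indicator_def)
  qed
  also have "\<dots> = ennreal (1 / r) * (\<Sum>i<m. \<integral>\<^sup>+\<omega>. ennreal (g (U (\<omega> (n + i)))) \<partial>Om N)"
  proof -
    have "(\<integral>\<^sup>+\<omega>. (\<Sum>i<m. ennreal (g (U (\<omega> (n + i))))) \<partial>Om N) = (\<Sum>i<m. \<integral>\<^sup>+\<omega>. ennreal (g (U (\<omega> (n + i)))) \<partial>Om N)"
    proof (rule nn_integral_sum)
      fix i assume "i \<in> {..<m}"
      then have [simp]: "n + i < N" using N by simp
      show "(\<lambda>\<omega>. ennreal (g (U (\<omega> (n + i))))) \<in> borel_measurable (Om N)" by measurable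
    qed
    moreover have "(\<lambda>\<omega>. \<Sum>i<m. ennreal (g (U (\<omega> (n + i))))) \<in> borel_measurable (Om N)"
    proof (rule borel_measurable_sum)
      fix i assume "i \<in> {..<m}"
      then have [simp]: "n + i < N" using N by simp
      show "(\<lambda>\<omega>. ennreal (g (U (\<omega> (n + i))))) \<in> borel_measurable (Om N)" by measurable
    qed
    ultimately show ?thesis by (simp add: nn_integral_cmult)
  qed
  also have "(\<Sum>i<m. \<integral>\<^sup>+\<omega>. ennreal (g (U (\<omega> (n + i)))) \<partial>Om N) = (\<Sum>i<m. \<integral>\<^sup>+x. ennreal (g (U x)) \<partial>P)"
  proof (intro sum.cong refl)
    fix i assume "i \<in> {..<m}"
    then have ni: "n + i < N" using N by simp
    show "(\<integral>\<^sup>+\<omega>. ennreal (g (U (\<omega> (n + i)))) \<partial>Om N) = (\<integral>\<^sup>+x. ennreal (g (U x)) \<partial>P)"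
      by (rule Om_nn_single[OF ni]) measurable
  qed
  also have "\<dots> \<le> (\<Sum>i<m. ennreal G)" by (intro sum_mono Eg)
  also have "ennreal (1 / r) * (\<Sum>i<m. ennreal G) = ennreal (m * G / r)"
    using G0 r by (simp add: ennreal_mult[symmetric] ennreal_of_nat_eq_real_of_nat)
  finally have "emeasure (Om N) ?A \<le> ennreal (m * G / r)"
    by (auto simp: mult_left_mono)
  then show ?thesis using G0 r by (simp add: O.emeasure_eq_measure)
qed


lemma chi_facts:
  assumes m: "m = Suc k" and a: "0 < \<alpha>" "\<alpha> < 1" and r: "0 < r"
  defines "q \<equiv> chi2_quantile (2 * m) (1 - \<alpha>)"
  shows "measure (chiM k) {q - r<..} \<le> \<alpha> + r / (2 * sqrt (real m))"
    and "\<alpha> - r / (2 * sqrt (real m)) \<le> measure (chiM k) {q + r..}"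
proof -
  interpret C: prob_space "chiM k" by (rule prob_space_chiM)
  have cq: "measure (chiM k) {..q} = 1 - \<alpha>"
    using chi_quantile[of "1 - \<alpha>" m k] a m chi2_cdf_eq[OF m] unfolding q_def by simp
  have up: "measure (chiM k) {q<..} = \<alpha>"
  proof -
    have "{q<..} = space (chiM k) - {..q}" by auto
    then have "measure (chiM k) {q<..} = 1 - measure (chiM k) {..q}"
      using C.prob_compl[of "{..q}"] by simp
    then show ?thesis using cq by simp
  qed
  have sm: "sqrt (real k + 1) = sqrt (real m)" using m by simp
  have i1: "measure (chiM k) {q - r<..q} \<le> r / (2 * sqrt (real m))"
    using measure_chiM_Ioc[of "q - r" q k] r sm by simp
  have i2: "measure (chiM k) {q<..q + r} \<le> r / (2 * sqrt (real m))"
    using measure_chiM_Ioc[of q "q + r" k] r sm by simp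
  have eqU: "{q - r<..} = {q - r<..q} \<union> {q<..}" using r by auto
  have "measure (chiM k) ({q - r<..q} \<union> {q<..}) = measure (chiM k) {q - r<..q} + measure (chiM k) {q<..}"
    by (rule C.finite_measure_Union) auto
  then have "measure (chiM k) {q - r<..} = measure (chiM k) {q - r<..q} + measure (chiM k) {q<..}"
    unfolding eqU .
  then show "measure (chiM k) {q - r<..} \<le> \<alpha> + r / (2 * sqrt (real m))" using i1 up by simp
  have "{q<..} \<subseteq> {q<..q + r} \<union> {q + r..}" by auto
  then have "measure (chiM k) {q<..} \<le> measure (chiM k) ({q<..q + r} \<union> {q + r..})"
    by (intro C.finite_measure_mono) auto
  also have "\<dots> \<le> measure (chiM k) {q<..q + r} + measure (chiM k) {q + r..}"
    by (intro measure_Un_le) auto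
  finally show "\<alpha> - r / (2 * sqrt (real m)) \<le> measure (chiM k) {q + r..}" using i2 up by simp
qed

lemma prob_b:
  assumes n: "0 < n" and m: "m = Suc k" and N: "N = n + m" and c: "0 \<le> c"
    and e: "0 < epsn n \<delta>" "epsn n \<delta> < 1"
    and ce: "(3 * c^2 + 2 * c + 4) / n \<le> epsn n \<delta>" and a: "0 < \<alpha>" "\<alpha> < 1" and r: "0 < r"
  shows "\<bar>measure (Om N) {\<omega>\<in>space (Om N). chi2_quantile (2 * m) (1 - \<alpha>) \<le> fisher_stat n m \<delta> s \<omega>} - \<alpha>\<bar>
    \<le> r / (2 * sqrt (real m)) + 2 * (real n + 1) * exp (- (c^2 / 4)) +
       m * ((2 * epsn n \<delta> - 2 * epsn n \<delta> * ln (epsn n \<delta>)) + (4 * c / sqrt n) * 3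
         + (4 * (c^2 + c + 2) / n) * (ln (1 + epsn n \<delta>) - ln (epsn n \<delta>))) / r"
proof -
  interpret O: prob_space "Om N" by (rule prob_Om)
  define e where "e = epsn n \<delta>"
  define q where "q = chi2_quantile (2 * m) (1 - \<alpha>)"
  define ER where "ER = (2 * e - 2 * e * ln e) + (4 * c / sqrt n) * 3 + (4 * (c^2 + c + 2) / n) * (ln (1 + e) - ln e)"
  define T where "T \<omega> = fisher_stat n m \<delta> s \<omega>" for \<omega>
  define T0 where "T0 \<omega> = (\<Sum>i<m. - 2 * ln (U (\<omega> (n + i))))" for \<omega>
  define g where "g v = max 0 (rhof n c e v)" for v
  define R where "R \<omega> = (\<Sum>i<m. g (U (\<omega> (n + i))))" for \<omega>
  have e': "0 < e" "e < 1" using e by (auto simp: e_def)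
  have nN: "n + m \<le> N" "n \<le> N" using N by auto
  have [measurable]: "g \<in> borel_measurable borel" unfolding g_def[abs_def] by measurable
  have Tm[measurable]: "T \<in> borel_measurable (Om N)" unfolding T_def[abs_def] using nN(1) by measurable
  have T0m[measurable]: "T0 \<in> borel_measurable (Om N)" unfolding T0_def[abs_def] by (rule meas_sum_shift[OF nN(1)]) measurable
  have Rm[measurable]: "R \<in> borel_measurable (Om N)" unfolding R_def[abs_def] by (rule meas_sum_shift[OF nN(1)]) measurable
  define Bd where "Bd = Bad n N c"
  define Z0 where "Z0 = {\<omega>\<in>space (Om N). \<exists>i<m. U (\<omega> (n + i)) \<le> 0}"
  define RR where "RR = {\<omega>\<in>space (Om N). r \<le> R \<omega>}"
  have Bdm: "Bd \<in> sets (Om N)" unfolding Bd_def by (rule Bad_meas[OF nN(2)])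
  have Z0m: "Z0 \<in> sets (Om N)"
  proof -
    have eq: "Z0 = (\<Union>i<m. {\<omega>\<in>space (Om N). U (\<omega> (n + i)) \<le> 0})" unfolding Z0_def by auto
    show ?thesis unfolding eq
    proof (intro sets.finite_UN)
      fix i assume "i \<in> {..<m}"
      then have [simp]: "n + i < N" using N by simp
      show "{\<omega>\<in>space (Om N). U (\<omega> (n + i)) \<le> 0} \<in> sets (Om N)" by measurable
    qed simp
  qed
  have RRm: "RR \<in> sets (Om N)" unfolding RR_def by measurable
  have pBd: "measure (Om N) Bd \<le> 2 * (real n + 1) * exp (- (c^2 / 4))"
    unfolding Bd_def by (rule Bad_prob[OF n nN(2) c])
  have pZ0: "measure (Om N) Z0 = 0" unfolding Z0_def by (rule Z0_null[OF N])
  have ER0: "0 \<le> ER"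
  proof -
    have "e * ln e \<le> 0" using e' by (simp add: mult_nonneg_nonpos)
    then have t1: "0 \<le> 2 * e - 2 * e * ln e" using e' by linarith
    have t2: "0 \<le> (4 * c / sqrt n) * 3" using c by simp
    have "0 \<le> ln (1 + e) - ln e" using e' by simp
    then have t3: "0 \<le> (4 * (c^2 + c + 2) / n) * (ln (1 + e) - ln e)" using c by simp
    show ?thesis unfolding ER_def using t1 t2 t3 by linarith
  qed
  have pRR: "measure (Om N) RR \<le> m * ER / r"
  proof -
    have Eg: "(\<integral>\<^sup>+x. ennreal (g (U x)) \<partial>P) \<le> ennreal ER"
    proof -
      have "(\<integral>\<^sup>+x. ennreal (g (U x)) \<partial>P) = (\<integral>\<^sup>+x. ennreal (rhof n c e (U x)) \<partial>P)"
        by (intro nn_integral_cong) (simp add: g_def max_def ennreal_neg)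
      also have "\<dots> \<le> ennreal ER" unfolding ER_def by (rule E_rho[OF e' n c])
      finally show ?thesis .
    qed
    show ?thesis unfolding RR_def R_def
      by (rule markov_R[OF N]) (use Eg ER0 r in \<open>auto simp: g_def\<close>)
  qed
  have good: "\<bar>T \<omega> - T0 \<omega>\<bar> \<le> R \<omega>" if w: "\<omega> \<in> space (Om N)" "\<omega> \<notin> Bd" "\<omega> \<notin> Z0" for \<omega>
  proof -
    have w1: "\<omega> \<in> space (Om N) - Bad n N c" using w by (simp add: Bd_def)
    have pos: "\<forall>i<m. 0 < U (\<omega> (n + i))" using w by (auto simp: Z0_def not_le)
    have "\<bar>T \<omega> - T0 \<omega>\<bar> \<le> (\<Sum>i<m. rhof n c (epsn n \<delta>) (U (\<omega> (n + i))))"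
      unfolding T_def T0_def by (rule stat_bounds(2)[OF n N c e ce w1 pos])
    also have "\<dots> \<le> R \<omega>" unfolding R_def g_def e_def by (intro sum_mono) simp
    finally show ?thesis .
  qed
  have T0set: "measure (Om N) {\<omega>\<in>space (Om N). T0 \<omega> \<in> A} = measure (chiM k) A" if "A \<in> sets borel" for A
    unfolding T0_def by (rule T0_measure[OF m N that])
  note cf = chi_facts[OF m a r]
  let ?S = "{\<omega>\<in>space (Om N). q \<le> T \<omega>}"
  have Sm: "?S \<in> sets (Om N)" by measurable
  let ?U1 = "{\<omega>\<in>space (Om N). T0 \<omega> \<in> {q - r<..}}"
  have U1m: "?U1 \<in> sets (Om N)" by measurable
  have sub1: "?S \<subseteq> ((Bd \<union> Z0) \<union> RR) \<union> ?U1"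
  proof
    fix \<omega> assume w: "\<omega> \<in> ?S"
    show "\<omega> \<in> ((Bd \<union> Z0) \<union> RR) \<union> ?U1"
    proof (cases "\<omega> \<in> Bd \<or> \<omega> \<in> Z0 \<or> \<omega> \<in> RR")
      case False
      then have "\<bar>T \<omega> - T0 \<omega>\<bar> \<le> R \<omega>" "R \<omega> < r" using good[of \<omega>] w by (auto simp: RR_def)
      then have "q - r < T0 \<omega>" using w by auto
      then show ?thesis using w by auto
    qed auto
  qed
  have "measure (Om N) ?S \<le> measure (Om N) (((Bd \<union> Z0) \<union> RR) \<union> ?U1)"
    using sub1 Bdm Z0m RRm U1m by (intro O.finite_measure_mono) auto
  also have "\<dots> \<le> ((measure (Om N) Bd + measure (Om N) Z0) + measure (Om N) RR) + measure (Om N) ?U1"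
    using Bdm Z0m RRm U1m
    by (meson add_right_mono measure_Un_le order_trans sets.Un)
  also have "measure (Om N) ?U1 = measure (chiM k) {q - r<..}" by (rule T0set) simp
  finally have upper: "measure (Om N) ?S \<le> measure (Om N) Bd + m * ER / r + (\<alpha> + r / (2 * sqrt (real m)))"
    using pZ0 pRR cf(1) unfolding q_def by linarith
  let ?L1 = "{\<omega>\<in>space (Om N). T0 \<omega> \<in> {q + r..}}"
  have L1m: "?L1 \<in> sets (Om N)" by measurable
  have sub2: "?L1 \<subseteq> ((Bd \<union> Z0) \<union> RR) \<union> ?S"
  proof
    fix \<omega> assume w: "\<omega> \<in> ?L1"
    show "\<omega> \<in> ((Bd \<union> Z0) \<union> RR) \<union> ?S"
    proof (cases "\<omega> \<in> Bd \<or> \<omega> \<in> Z0 \<or> \<omega> \<in> RR")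
      case False
      then have "\<bar>T \<omega> - T0 \<omega>\<bar> \<le> R \<omega>" "R \<omega> < r" using good[of \<omega>] w by (auto simp: RR_def)
      then have "q \<le> T \<omega>" using w by auto
      then show ?thesis using w by auto
    qed auto
  qed
  have "measure (chiM k) {q + r..} = measure (Om N) ?L1" by (rule T0set[symmetric]) simp
  also have "\<dots> \<le> measure (Om N) (((Bd \<union> Z0) \<union> RR) \<union> ?S)"
    using sub2 Bdm Z0m RRm Sm by (intro O.finite_measure_mono) auto
  also have "\<dots> \<le> ((measure (Om N) Bd + measure (Om N) Z0) + measure (Om N) RR) + measure (Om N) ?S"
    using Bdm Z0m RRm Sm
    by (meson add_right_mono measure_Un_le order_trans sets.Un)
  finally have lower: "\<alpha> - r / (2 * sqrt (real m)) \<le> measure (Om N) Bd + m * ER / r + measure (Om N) ?S"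
    using pZ0 pRR cf(2) unfolding q_def by linarith
  have "\<bar>measure (Om N) ?S - \<alpha>\<bar> \<le> r / (2 * sqrt (real m)) + 2 * (real n + 1) * exp (- (c^2 / 4)) + m * ER / r"
    using upper lower pBd by (simp add: abs_le_iff)
  then show ?thesis unfolding T_def q_def ER_def e_def .
qed

end

lemma epsn_eq:
  assumes "0 < n" shows "epsn n \<delta> = sqrt (ln (2 / \<delta>) / 2) / sqrt n"
proof -
  have "ln (2 / \<delta>) / (2 * real n) = (ln (2 / \<delta>) / 2) / real n" by simp
  then show ?thesis unfolding epsn_def by (simp only: real_sqrt_divide)
qed

lemma e0_pos: assumes "0 < \<delta>" "\<delta> < 1" shows "0 < sqrt (ln (2 / \<delta>) / 2)"
proof -
  have "1 < 2 / \<delta>" using assms by (simp add: field_simps)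
  then have "0 < ln (2 / \<delta>)" using ln_gt_zero by blast
  then show ?thesis by simp
qed

lemma quantile_lower:
  assumes m: "m = Suc k" and a: "0 < \<alpha>" "\<alpha> < 1"
  shows "2 * real m - 3 / sqrt (1 - \<alpha>) * sqrt (real m) \<le> chi2_quantile (2 * m) (1 - \<alpha>)"
proof (rule ccontr)
  interpret C: prob_space "chiM k" by (rule prob_space_chiM)
  define K where "K = 3 / sqrt (1 - \<alpha>)"
  define q where "q = chi2_quantile (2 * m) (1 - \<alpha>)"
  define t where "t = K * sqrt (real m)"
  assume "\<not> 2 * real m - 3 / sqrt (1 - \<alpha>) * sqrt (real m) \<le> chi2_quantile (2 * m) (1 - \<alpha>)"
  then have lt: "q < 2 * real m - t" by (simp add: q_def t_def K_def)
  have K0: "0 < K" using a by (simp add: K_def)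
  have t0: "0 < t" using K0 m by (simp add: t_def)
  have cq: "chi2_cdf (2 * m) q = 1 - \<alpha>" unfolding q_def by (rule chi_quantile[OF _ _ m]) (use a in auto)
  have "chi2_cdf (2 * m) q \<le> chi2_cdf (2 * m) (2 * real m - t)"
    unfolding chi2_cdf_eq[OF m] using lt by (intro C.finite_measure_mono) auto
  also have "\<dots> \<le> 4 * real m / t^2" by (rule chi_cdf_lower_tail[OF t0 m])
  also have "4 * real m / t^2 = 4 / K^2"
  proof -
    have mp: "0 < real m" using m by simp
    have "t^2 = K^2 * real m" using mp by (simp add: t_def power_mult_distrib)
    then show ?thesis using mp K0 by simp
  qed
  also have "4 / K^2 = 4 * (1 - \<alpha>) / 9" using a by (simp add: K_def power_divide)
  finally have "1 - \<alpha> \<le> 4 * (1 - \<alpha>) / 9" using cq by simp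
  then show False using a by simp
qed

context setting
begin

lemma reject_eq: "reject_prob P s n m \<delta> \<alpha> = measure (Om (n + m)) {\<omega>\<in>space (Om (n + m)). chi2_quantile (2 * m) (1 - \<alpha>) \<le> fisher_stat n m \<delta> s \<omega>}"
  by (simp add: reject_prob_def Om_def)


lemma part_a:
  assumes d: "0 < \<delta>" "\<delta> < 1" and g: "0 < \<gamma>" and a: "0 < \<alpha>" "\<alpha> < 1"
  defines "e0 \<equiv> sqrt (ln (2 / \<delta>) / 2)"
  defines "c0 \<equiv> e0 / 48"
  defines "aa \<equiv> e0 / 96"
  defines "DD \<equiv> \<gamma> * aa * e0 / 8"
  defines "C \<equiv> min (c0^2 / 8) (DD / 2)"
  shows "\<forall>\<^sub>F n in sequentially. \<forall>m::nat. real m = \<gamma> * real n \<longrightarrow>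
            reject_prob P s n m \<delta> \<alpha> \<le> exp (- C * (ln (real n))^2)"
proof -
  define K where "K = 3 / sqrt (1 - \<alpha>)"
  have e0: "0 < e0" unfolding e0_def by (rule e0_pos[OF d])
  have c0: "0 < c0" using e0 by (simp add: c0_def)
  have aa: "0 < aa" using e0 by (simp add: aa_def)
  have D0: "0 < DD" using g aa e0 by (simp add: DD_def)
  have K0: "0 < K" using a by (simp add: K_def)
  have C0: "0 < C" using c0 D0 by (simp add: C_def)
  have CD: "0 < DD - C" using D0 by (simp add: C_def min_def)
  have Cc: "C \<le> c0^2 / 8" by (simp add: C_def)
  have sg: "0 < sqrt \<gamma>" using g by simp
  have ev1: "\<forall>\<^sub>F n in sequentially. (2::nat) \<le> n" by (rule eventually_ge_at_top)
  have ev2: "\<forall>\<^sub>F n::nat in sequentially. e0 / sqrt n < 1" using e0 by real_asymp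
  have ev3: "\<forall>\<^sub>F n::nat in sequentially. (3 * (e0/48 * ln n)^2 + 2 * (e0/48 * ln n) + 4) / n \<le> e0 / sqrt n"
    using e0 by real_asymp
  have ev4: "\<forall>\<^sub>F n::nat in sequentially. (e0/96 * ln n / sqrt n) * (- 2 * ln (e0 / sqrt n) + 2) \<le> 1"
    using e0 by real_asymp
  have ev5: "\<forall>\<^sub>F n::nat in sequentially. 2 * (real n + 1) * exp (- (c0^2 / 8 * (ln n)^2)) \<le> 1/2"
    using c0 by real_asymp
  have ev6: "\<forall>\<^sub>F n::nat in sequentially.
   (- 2 * (e0 / sqrt n) + 2 * (e0 / sqrt n) * ln (e0 / sqrt n)) + (4 * (e0/48 * ln n) / sqrt n) * 3
    + (4 * ((e0/48 * ln n)^2 + e0/48 * ln n + 2) / n) * (ln (1 + e0 / sqrt n) - ln (e0 / sqrt n))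
   \<le> - (e0 / 2 * ln n / sqrt n)" using e0 by real_asymp
  have ev7: "\<forall>\<^sub>F n::nat in sequentially. aa * (K * sqrt \<gamma>) * ln n \<le> DD * (ln n)^2"
    using aa K0 sg D0 by real_asymp
  have ev8: "\<forall>\<^sub>F n::nat in sequentially. ln 2 \<le> (DD - C) * (ln n)^2"
    using CD by real_asymp
  show ?thesis
  proof (rule eventually_mono[OF eventually_conj[OF ev1 eventually_conj[OF ev2 eventually_conj[OF ev3
      eventually_conj[OF ev4 eventually_conj[OF ev5 eventually_conj[OF ev6 eventually_conj[OF ev7 ev8]]]]]]]], safe)
    fix n m :: nat
    assume n2: "2 \<le> n" and h2: "e0 / sqrt n < 1"
      and h3: "(3 * (e0/48 * ln n)^2 + 2 * (e0/48 * ln n) + 4) / n \<le> e0 / sqrt n"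
      and h4: "(e0/96 * ln n / sqrt n) * (- 2 * ln (e0 / sqrt n) + 2) \<le> 1"
      and h5: "2 * (real n + 1) * exp (- (c0^2 / 8 * (ln n)^2)) \<le> 1/2"
      and h6: "(- 2 * (e0 / sqrt n) + 2 * (e0 / sqrt n) * ln (e0 / sqrt n)) + (4 * (e0/48 * ln n) / sqrt n) * 3
    + (4 * ((e0/48 * ln n)^2 + e0/48 * ln n + 2) / n) * (ln (1 + e0 / sqrt n) - ln (e0 / sqrt n))
   \<le> - (e0 / 2 * ln n / sqrt n)"
      and h7: "aa * (K * sqrt \<gamma>) * ln n \<le> DD * (ln n)^2"
      and h8: "ln 2 \<le> (DD - C) * (ln n)^2"
      and mg: "real m = \<gamma> * real n"
    define L where "L = ln (real n)"
    have n0: "0 < n" using n2 by simp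
    have L0: "0 < L" using n2 by (simp add: L_def)
    have sn: "0 < sqrt (real n)" using n0 by simp
    define e where "e = epsn n \<delta>"
    have ee: "e = e0 / sqrt n" unfolding e_def e0_def by (rule epsn_eq[OF n0])
    have e_pos: "0 < e" using e0 sn by (simp add: ee)
    define c where "c = c0 * L"
    have c_nn: "0 \<le> c" using c0 L0 by (simp add: c_def)
    define l where "l = aa * L / sqrt n"
    have l_nn: "0 \<le> l" using aa L0 sn by (simp add: l_def)
    have mpos: "0 < real m" using mg g n0 by simp
    then obtain k where mk: "m = Suc k" by (cases m) auto
    have ce: "(3 * c^2 + 2 * c + 4) / n \<le> e" using h3 by (simp add: c_def c0_def L_def ee)
    have lB: "l * (- 2 * ln e + 2) \<le> 1" using h4 by (simp add: l_def aa_def L_def ee)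
    define EZ where "EZ = (2 - 2 * e + 2 * e * ln e) + (4 * c / sqrt n) * 3 + (4 * (c^2 + c + 2) / n) * (ln (1 + e) - ln e)"
    define q where "q = chi2_quantile (2 * m) (1 - \<alpha>)"
    have pa: "measure (Om (n + m)) {\<omega>\<in>space (Om (n + m)). q \<le> fisher_stat n m \<delta> s \<omega>}
       \<le> 2 * (real n + 1) * exp (- (c^2 / 4)) + exp (- l * q) * (1 + l * EZ + 24 * l^2) ^ m"
      unfolding EZ_def e_def
      by (rule prob_a[OF n0 refl c_nn e_pos[unfolded e_def] h2[folded ee, unfolded e_def] ce[unfolded e_def] l_nn lB[unfolded e_def]])
    have b1: "2 * (real n + 1) * exp (- (c^2 / 4)) \<le> exp (- C * L^2) / 2"
    proof -
      have "exp (- (c^2 / 4)) = exp (- (c0^2 / 8 * L^2) + - (c0^2 / 8 * L^2))"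
        by (rule arg_cong[where f=exp]) (simp add: c_def power_mult_distrib)
      also have "\<dots> = exp (- (c0^2 / 8 * L^2)) * exp (- (c0^2 / 8 * L^2))" by (rule exp_add)
      also have "\<dots> \<le> exp (- (c0^2 / 8 * L^2)) * exp (- C * L^2)"
        using Cc L0 by (intro mult_left_mono) (auto intro!: mult_right_mono)
      finally have "2 * (real n + 1) * exp (- (c^2 / 4)) \<le> 2 * (real n + 1) * exp (- (c0^2 / 8 * L^2)) * exp (- C * L^2)"
        by (simp add: mult.assoc)
      also have "\<dots> \<le> 1/2 * exp (- C * L^2)" using h5 by (intro mult_right_mono) (auto simp: L_def)
      finally show ?thesis by simp
    qed
    have EZ0: "0 \<le> EZ"
    proof -
      have "0 \<le> 2 - 2 * e + 2 * e * ln e" using EA_nonneg e_pos by simp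
      moreover have "0 \<le> ln (1 + e) - ln e" using e_pos by simp
      ultimately show ?thesis unfolding EZ_def using c_nn n0 by simp
    qed
    have qb: "2 * real m - K * sqrt (real m) \<le> q" unfolding q_def K_def by (rule quantile_lower[OF mk a])
    have sm: "sqrt (real m) = sqrt \<gamma> * sqrt n" using mg g by (simp add: real_sqrt_mult)
    have EZb: "EZ - 2 \<le> - (e0 / 2 * L / sqrt n)"
      using h6 unfolding EZ_def c_def c0_def ee L_def by simp
    have Bp: "0 < 1 + l * EZ + 24 * l^2" using l_nn EZ0 by (simp add: add_pos_nonneg)
    have "exp (- l * q) * (1 + l * EZ + 24 * l^2) ^ m \<le> exp (- l * (2 * real m - K * sqrt (real m))) * exp (l * EZ + 24 * l^2) ^ m"
    proof (intro mult_mono power_mono)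
      show "exp (- l * q) \<le> exp (- l * (2 * real m - K * sqrt (real m)))" using qb l_nn by (simp add: mult_left_mono)
      show "1 + l * EZ + 24 * l^2 \<le> exp (l * EZ + 24 * l^2)" using exp_ge_add_one_self[of "l * EZ + 24 * l^2"] by (simp only: add.assoc)
    qed (use Bp in auto)
    also have "\<dots> = exp (- l * (2 * real m - K * sqrt (real m)) + real m * (l * EZ + 24 * l^2))"
      by (simp add: exp_of_nat_mult[symmetric] mult_exp_exp)
    also have "- l * (2 * real m - K * sqrt (real m)) + real m * (l * EZ + 24 * l^2)
             = l * K * sqrt (real m) + real m * l * (EZ - 2) + 24 * real m * l^2"
      by (simp add: algebra_simps)
    also have "\<dots> \<le> l * K * sqrt (real m) + real m * l * (- (e0 / 2 * L / sqrt n)) + 24 * real m * l^2"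
      using EZb mpos l_nn by (intro add_mono mult_left_mono order_refl) auto
    also have "l * K * sqrt (real m) = aa * (K * sqrt \<gamma>) * L"
      using sn by (simp add: l_def sm)
    also have "real m * l * (- (e0 / 2 * L / sqrt n)) = - (\<gamma> * aa * (e0 / 2) * L^2)"
      using sn n0 by (simp add: mg l_def power2_eq_square field_simps)
    also have "24 * real m * l^2 = 24 * \<gamma> * aa^2 * L^2"
      using sn n0 by (simp add: mg l_def power2_eq_square field_simps)
    also have "aa * (K * sqrt \<gamma>) * L + - (\<gamma> * aa * (e0 / 2) * L^2) + 24 * \<gamma> * aa^2 * L^2
             = aa * (K * sqrt \<gamma>) * L - 2 * DD * L^2"
      by (simp add: DD_def aa_def power2_eq_square field_simps)
    also have "\<dots> \<le> - DD * L^2" using h7 by (simp add: L_def)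
    finally have b2a: "exp (- l * q) * (1 + l * EZ + 24 * l^2) ^ m \<le> exp (- DD * L^2)" by simp
    have b2: "exp (- DD * L^2) \<le> exp (- C * L^2) / 2"
    proof -
      have "exp (- DD * L^2) = exp (- C * L^2) * exp (- ((DD - C) * L^2))" by (simp add: mult_exp_exp algebra_simps)
      also have "exp (- ((DD - C) * L^2)) \<le> exp (- ln 2)" using h8 by (simp add: L_def)
      also have "exp (- ln 2) = (1/2::real)" by (simp add: exp_minus)
      finally show ?thesis by simp
    qed
    have "reject_prob P s n m \<delta> \<alpha> \<le> exp (- C * L^2) / 2 + exp (- C * L^2) / 2"
      unfolding reject_eq q_def[symmetric] using pa b1 b2a b2 by linarith
    then show "reject_prob P s n m \<delta> \<alpha> \<le> exp (- C * (ln (real n))^2)" by (simp add: L_def)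
  qed
qed


lemma part_b:
  assumes d: "0 < \<delta>" "\<delta> < 1" and a: "0 < \<alpha>" "\<alpha> < 1"
    and mt: "filterlim m at_top sequentially"
    and mo: "(\<lambda>n. real (m n)) \<in> o(\<lambda>n. real n / (ln (real n))^2)"
  shows "(\<lambda>n. reject_prob P s n (m n) \<delta> \<alpha>) \<longlonglongrightarrow> \<alpha>"
proof (rule tendstoI)
  fix eps :: real assume eps: "0 < eps"
  define e0 where "e0 = sqrt (ln (2 / \<delta>) / 2)"
  define c0 where "c0 = e0 / 48"
  have e0: "0 < e0" unfolding e0_def by (rule e0_pos[OF d])
  have c0: "0 < c0" using e0 by (simp add: c0_def)
  define eta where "eta = eps / 2"
  have eta: "0 < eta" using eps by (simp add: eta_def)
  have lim1: "(\<lambda>n. real (m n) / (real n / (ln (real n))^2)) \<longlonglongrightarrow> 0"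
    by (rule smalloD_tendsto[OF mo])
  have lim2: "(\<lambda>n. sqrt (real (m n) * (ln (real n))^2 / real n)) \<longlonglongrightarrow> 0"
  proof -
    have "(\<lambda>n. sqrt (real (m n) / (real n / (ln (real n))^2))) \<longlonglongrightarrow> sqrt 0"
      by (intro tendsto_real_sqrt lim1)
    moreover have "(\<lambda>n. real (m n) / (real n / (ln (real n))^2)) = (\<lambda>n. real (m n) * (ln (real n))^2 / real n)"
      by (simp add: fun_eq_iff)
    ultimately show ?thesis by simp
  qed
  have lim3: "(\<lambda>n. 2 * e0 * sqrt (real (m n) * (ln (real n))^2 / real n) / eta) \<longlonglongrightarrow> 2 * e0 * 0 / eta"
    by (intro tendsto_intros lim2) (use eta in auto)
  have ev1: "\<forall>\<^sub>F n in sequentially. (2::nat) \<le> n" by (rule eventually_ge_at_top)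
  have evm: "\<forall>\<^sub>F n in sequentially. (1::nat) \<le> m n" using mt by (simp add: filterlim_at_top)
  have ev2: "\<forall>\<^sub>F n::nat in sequentially. e0 / sqrt n < 1" using e0 by real_asymp
  have ev3: "\<forall>\<^sub>F n::nat in sequentially. (3 * (e0/48 * ln n)^2 + 2 * (e0/48 * ln n) + 4) / n \<le> e0 / sqrt n"
    using e0 by real_asymp
  have ev4: "\<forall>\<^sub>F n::nat in sequentially.
   (2 * (e0 / sqrt n) - 2 * (e0 / sqrt n) * ln (e0 / sqrt n)) + (4 * (e0/48 * ln n) / sqrt n) * 3
    + (4 * ((e0/48 * ln n)^2 + e0/48 * ln n + 2) / n) * (ln (1 + e0 / sqrt n) - ln (e0 / sqrt n))
   \<le> 2 * e0 * ln n / sqrt n" using e0 by real_asymp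
  have ev5: "\<forall>\<^sub>F n::nat in sequentially. 2 * (real n + 1) * exp (- ((c0 * ln n)^2 / 4)) < eps / 4"
  proof -
    have "(\<lambda>n::nat. 2 * (real n + 1) * exp (- ((c0 * ln n)^2 / 4))) \<longlonglongrightarrow> 0" using c0 by real_asymp
    then show ?thesis using eps by (intro order_tendstoD) auto
  qed
  have ev6: "\<forall>\<^sub>F n in sequentially. 2 * e0 * sqrt (real (m n) * (ln (real n))^2 / real n) / eta < eps / 4"
    using lim3 eps by (intro order_tendstoD) auto
  show "\<forall>\<^sub>F n in sequentially. dist (reject_prob P s n (m n) \<delta> \<alpha>) \<alpha> < eps"
  proof (rule eventually_mono[OF eventually_conj[OF ev1 eventually_conj[OF evm eventually_conj[OF ev2
      eventually_conj[OF ev3 eventually_conj[OF ev4 eventually_conj[OF ev5 ev6]]]]]]])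
    fix n :: nat
    assume H: "2 \<le> n \<and> 1 \<le> m n \<and> e0 / sqrt n < 1 \<and>
      (3 * (e0/48 * ln n)^2 + 2 * (e0/48 * ln n) + 4) / n \<le> e0 / sqrt n \<and>
      (2 * (e0 / sqrt n) - 2 * (e0 / sqrt n) * ln (e0 / sqrt n)) + (4 * (e0/48 * ln n) / sqrt n) * 3
       + (4 * ((e0/48 * ln n)^2 + e0/48 * ln n + 2) / n) * (ln (1 + e0 / sqrt n) - ln (e0 / sqrt n))
       \<le> 2 * e0 * ln n / sqrt n \<and>
      2 * (real n + 1) * exp (- ((c0 * ln n)^2 / 4)) < eps / 4 \<and>
      2 * e0 * sqrt (real (m n) * (ln (real n))^2 / real n) / eta < eps / 4"
    define L where "L = ln (real n)"
    define mm where "mm = m n"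
    have n0: "0 < n" using H by simp
    have L0: "0 < L" using H by (simp add: L_def)
    have sn: "0 < sqrt (real n)" using n0 by simp
    have m1: "1 \<le> mm" using H by (simp add: mm_def)
    then obtain k where mk: "mm = Suc k" by (cases mm) auto
    have smp: "0 < sqrt (real mm)" using m1 by simp
    define e where "e = epsn n \<delta>"
    have ee: "e = e0 / sqrt n" unfolding e_def e0_def by (rule epsn_eq[OF n0])
    have e_pos: "0 < e" using e0 sn by (simp add: ee)
    have e1: "e < 1" using H by (simp add: ee)
    define c where "c = c0 * L"
    have c_nn: "0 \<le> c" using c0 L0 by (simp add: c_def)
    have ce: "(3 * c^2 + 2 * c + 4) / n \<le> e" using H by (simp add: c_def c0_def L_def ee)
    define r where "r = eta * sqrt (real mm)"
    have r0: "0 < r" using eta smp by (simp add: r_def)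
    define ER where "ER = (2 * e - 2 * e * ln e) + (4 * c / sqrt n) * 3 + (4 * (c^2 + c + 2) / n) * (ln (1 + e) - ln e)"
    have pb: "\<bar>measure (Om (n + mm)) {\<omega>\<in>space (Om (n + mm)). chi2_quantile (2 * mm) (1 - \<alpha>) \<le> fisher_stat n mm \<delta> s \<omega>} - \<alpha>\<bar>
      \<le> r / (2 * sqrt (real mm)) + 2 * (real n + 1) * exp (- (c^2 / 4)) + mm * ER / r"
      unfolding ER_def e_def
      by (rule prob_b[OF n0 mk refl c_nn e_pos[unfolded e_def] e1[unfolded e_def] ce[unfolded e_def] a r0])
    have t1: "r / (2 * sqrt (real mm)) = eps / 4" using smp by (simp add: r_def eta_def)
    have t2: "2 * (real n + 1) * exp (- (c^2 / 4)) < eps / 4" using H by (simp add: c_def L_def power_mult_distrib)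
    have ERb: "ER \<le> 2 * e0 * L / sqrt n" using H unfolding ER_def c_def c0_def ee L_def by simp
    have t3: "mm * ER / r < eps / 4"
    proof -
      have "mm * ER / r = sqrt (real mm) * ER / eta"
      proof -
        have "real mm = sqrt (real mm) * sqrt (real mm)" by simp
        then show ?thesis using smp eta unfolding r_def by (simp add: field_simps)
      qed
      also have "\<dots> \<le> sqrt (real mm) * (2 * e0 * L / sqrt n) / eta"
        using ERb smp eta by (intro divide_right_mono mult_left_mono) auto
      also have "sqrt (real mm) * (2 * e0 * L / sqrt n) / eta = 2 * e0 * sqrt (real mm * L^2 / real n) / eta"
        using L0 n0 by (simp add: real_sqrt_mult real_sqrt_divide)
      also have "\<dots> < eps / 4" using H by (simp add: mm_def L_def)
      finally show ?thesis .
    qed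
    have "\<bar>reject_prob P s n mm \<delta> \<alpha> - \<alpha>\<bar> < eps"
      unfolding reject_eq using pb t1 t2 t3 by linarith
    then show "dist (reject_prob P s n (m n) \<delta> \<alpha>) \<alpha> < eps" by (simp add: dist_real_def mm_def)
  qed
qed

end

theorem theorem12:
  fixes \<delta> :: real
  assumes "0 < \<delta>" "\<delta> < 1"
  shows
   "(\<forall>\<gamma>::real. 0 < \<gamma> \<longrightarrow>
       (\<exists>C>0. \<forall>\<alpha>::real. 0 < \<alpha> \<longrightarrow> \<alpha> < 1 \<longrightarrow>
          (\<forall>(P::'a::euclidean_space measure) s. valid_setting P s \<longrightarrow>
             (\<forall>\<^sub>F n in sequentially. \<forall>m::nat. real m = \<gamma> * real n \<longrightarrow>
                reject_prob P s n m \<delta> \<alpha> \<le> exp (- C * (ln (real n))^2)))))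
    \<and>
    (\<forall>\<alpha>::real. 0 < \<alpha> \<longrightarrow> \<alpha> < 1 \<longrightarrow>
       (\<forall>(P::'a measure) s (m::nat \<Rightarrow> nat). valid_setting P s \<longrightarrow>
          filterlim m at_top sequentially \<longrightarrow>
          (\<lambda>n. real (m n)) \<in> o(\<lambda>n. real n / (ln (real n))^2) \<longrightarrow>
          ((\<lambda>n. reject_prob P s n (m n) \<delta> \<alpha>) \<longlonglongrightarrow> \<alpha>)))"
proof (intro conjI allI impI)
  note d = assms
  fix \<gamma> :: real assume g: "0 < \<gamma>"
  define e0 where "e0 = sqrt (ln (2 / \<delta>) / 2)"
  define C where "C = min ((e0 / 48)^2 / 8) (\<gamma> * (e0 / 96) * e0 / 8 / 2)"
  have e0: "0 < e0" unfolding e0_def by (rule e0_pos[OF d])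
  have C0: "0 < C" using e0 g by (simp add: C_def)
  show "\<exists>C>0. \<forall>\<alpha>::real. 0 < \<alpha> \<longrightarrow> \<alpha> < 1 \<longrightarrow>
          (\<forall>(P::'a::euclidean_space measure) s. valid_setting P s \<longrightarrow>
             (\<forall>\<^sub>F n in sequentially. \<forall>m::nat. real m = \<gamma> * real n \<longrightarrow>
                reject_prob P s n m \<delta> \<alpha> \<le> exp (- C * (ln (real n))^2)))"
  proof (intro exI[of _ C] conjI C0 allI impI)
    fix \<alpha> :: real and P :: "'a measure" and s :: "'a \<Rightarrow> real"
    assume a: "0 < \<alpha>" "\<alpha> < 1" and vs: "valid_setting P s"
    have st: "setting P s" by (rule setting.intro[OF vs])
    show "\<forall>\<^sub>F n in sequentially. \<forall>m::nat. real m = \<gamma> * real n \<longrightarrow>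
                reject_prob P s n m \<delta> \<alpha> \<le> exp (- C * (ln (real n))^2)"
      using setting.part_a[OF st d g a] unfolding C_def e0_def .
  qed
next
  note d = assms
  fix \<alpha> :: real and P :: "'a measure" and s :: "'a \<Rightarrow> real" and m :: "nat \<Rightarrow> nat"
  assume a: "0 < \<alpha>" "\<alpha> < 1" and vs: "valid_setting P s" and mt: "filterlim m at_top sequentially"
    and mo: "(\<lambda>n. real (m n)) \<in> o(\<lambda>n. real n / (ln (real n))^2)"
  have st: "setting P s" by (rule setting.intro[OF vs])
  show "(\<lambda>n. reject_prob P s n (m n) \<delta> \<alpha>) \<longlonglongrightarrow> \<alpha>"
    by (rule setting.part_b[OF st d a mt mo])
qed

end
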